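(* Let $x\in\operatorname{dom}f$ and let $0<\varepsilon_t\le1$, $t\in T$, be such that $\inf_{t\in T}\varepsilon_tf_t(x)>-\infty$. Then for every $\varepsilon>0$, \[ \Big[\overline{\operatorname{co}}\Big(\bigcup_{t\in T}\partial_\varepsilon(\varepsilon_tf_t)(x)\Big)\Big]_\infty\subset \mathrm{N}_{\operatorname{dom}f}(x), \] and if in addition the standard hypothesis (SH) holds, then \[ \mathrm{N}_{\operatorname{dom}f}(x)=\Big[\overline{\operatorname{co}}\Big(\bigcup_{t\in T}\partial_\varepsilon(\varepsilon_tf_t)(x)\Big)\Big]_\infty . \]
   Context: $X$ is a real separated locally convex space with dual $X^*$ carrying the weak$^*$ topology (closures in $X^*$ are weak$^*$). $\Gamma_0(X)$ is the set of proper convex lsc functions $X\to\mathbb{R}\cup\{+\infty\}$. $T$ is a nonempty index set, $\{f_t: t\in T\}\subset\Gamma_0(X)$ and $f:=\sup_{t\in T}f_t$. For $g:X\to\overline{\mathbb{R}}$, $\partial_\varepsilon g(x)=\{x^*\in X^*:\ g(y)\ge g(x)+\langle x^*,y-x\rangle-\varepsilon\ \forall y\}$ if $g(x)\in\mathbb{R}$, $\varepsilon\ge0$ (empty otherwise). $\overline{\operatorname{co}}$ is the weak$^*$-closed convex hull; for a nonempty closed convex set $C$, $C_\infty:=\{y: z+\lambda y\in C$ for some $z\in C$ and all $\lambda\ge0\}$. The normal cone is $\mathrm{N}_A(x)=\{x^*:\langle x^*,y-x\rangle\le0\ \forall y\in A\}$ for $x\in A$. Standard hypothesis (SH): $T$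 is a compact Hausdorff topological space and for every $z\in X$ the map $t\mapsto f_t(z)$ is upper semicontinuous on $T$. *)

theory Defs
  imports "HOL-Analysis.Analysis"
begin

definition lcs :: "'a::real_vector topology \<Rightarrow> bool" where
  "lcs \<tau> \<longleftrightarrow> topspace \<tau> = UNIV \<and> Hausdorff_space \<tau>
     \<and> continuous_map (prod_topology \<tau> \<tau>) \<tau> (\<lambda>(x, y). x + y)
     \<and> continuous_map (prod_topology euclideanreal \<tau>) \<tau> (\<lambda>(a, x). a *\<^sub>R x)
     \<and> (\<forall>U. openin \<tau> U \<and> 0 \<in> U \<longrightarrow> (\<exists>V. openin \<tau> V \<and> convex V \<and> 0 \<in> V \<and> V \<subseteq> U))"

definition dual :: "'a::real_vector topology \<Rightarrow> ('a \<Rightarrow> real) set" where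
  "dual \<tau> = {\<phi>. linear \<phi> \<and> continuous_map \<tau> euclideanreal \<phi>}"

definition wstar :: "'a::real_vector topology \<Rightarrow> ('a \<Rightarrow> real) topology" where
  "wstar \<tau> = subtopology (product_topology (\<lambda>_. euclideanreal) UNIV) (dual \<tau>)"

definition convex_fun :: "('a \<Rightarrow> real) set \<Rightarrow> bool" where
  "convex_fun C \<longleftrightarrow> (\<forall>\<phi>\<in>C. \<forall>\<psi>\<in>C. \<forall>u::real. 0 \<le> u \<and> u \<le> 1 \<longrightarrow>
      (\<lambda>y. u * \<phi> y + (1 - u) * \<psi> y) \<in> C)"

definition wclco :: "'a::real_vector topology \<Rightarrow> ('a \<Rightarrow> real) set \<Rightarrow> ('a \<Rightarrow> real) set" where
  "wclco \<tau> S = \<Inter>{C. S \<subseteq> C \<and> convex_fun C \<and> closedin (wstar \<tau>) C}"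

definition rec_cone :: "('a \<Rightarrow> real) set \<Rightarrow> ('a \<Rightarrow> real) set" where
  "rec_cone C = {y. \<exists>z\<in>C. \<forall>r::real. r \<ge> 0 \<longrightarrow> (\<lambda>v. z v + r * y v) \<in> C}"

definition Gamma0 :: "'a::real_vector topology \<Rightarrow> ('a \<Rightarrow> ereal) set" where
  "Gamma0 \<tau> = {g. (\<forall>x. g x \<noteq> -\<infinity>) \<and> (\<exists>x. g x \<noteq> \<infinity>)
     \<and> (\<forall>x y. \<forall>u::real. 0 \<le> u \<and> u \<le> 1 \<longrightarrow>
          g (u *\<^sub>R x + (1 - u) *\<^sub>R y) \<le> ereal u * g x + ereal (1 - u) * g y)
     \<and> (\<forall>c::real. closedin \<tau> {x. g x \<le> ereal c})}"

definition edom :: "('a \<Rightarrow> ereal) \<Rightarrow> 'a set" where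
  "edom g = {x. g x < \<infinity>}"

definition eps_subdiff :: "'a::real_vector topology \<Rightarrow> real \<Rightarrow> ('a \<Rightarrow> ereal) \<Rightarrow> 'a \<Rightarrow> ('a \<Rightarrow> real) set" where
  "eps_subdiff \<tau> \<epsilon> g x = (if g x \<in> {-\<infinity>, \<infinity>} then {} else
     {\<phi> \<in> dual \<tau>. \<forall>y. g y \<ge> g x + ereal (\<phi> (y - x)) - ereal \<epsilon>})"

definition normal_cone :: "'a::real_vector topology \<Rightarrow> 'a set \<Rightarrow> 'a \<Rightarrow> ('a \<Rightarrow> real) set" where
  "normal_cone \<tau> A x = {\<phi> \<in> dual \<tau>. \<forall>y\<in>A. \<phi> (y - x) \<le> 0}"

definition SH :: "'b topology \<Rightarrow> 'b set \<Rightarrow> ('b \<Rightarrow> 'a \<Rightarrow> ereal) \<Rightarrow> bool" where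
  "SH TT T F \<longleftrightarrow> topspace TT = T \<and> compact_space TT \<and> Hausdorff_space TT
     \<and> (\<forall>z. \<forall>c::real. openin TT {t \<in> T. F t z < ereal c})"

end

theory Submission
  imports Defs "HOL-Library.Function_Algebras"
begin


definition sublin :: "('v::real_vector \<Rightarrow> real) \<Rightarrow> bool" where
  "sublin q \<longleftrightarrow> (\<forall>x y. q (x + y) \<le> q x + q y) \<and> (\<forall>c x. 0 \<le> c \<longrightarrow> q (c *\<^sub>R x) = c * q x)"

lemma sublin_add: "sublin q \<Longrightarrow> q (x + y) \<le> q x + q y"
  unfolding sublin_def by blast
lemma sublin_scale: "sublin q \<Longrightarrow> 0 \<le> c \<Longrightarrow> q (c *\<^sub>R x) = c * q x"
  unfolding sublin_def by blast
lemma sublin_0: "sublin q \<Longrightarrow> q 0 = 0"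
  using sublin_scale[of q 0 0] by simp
lemma sublin_neg: "sublin q \<Longrightarrow> - q (- x) \<le> q x"
  using sublin_add[of q x "-x"] sublin_0[of q] by simp

definition hdir :: "('v::real_vector \<Rightarrow> real) \<Rightarrow> 'v \<Rightarrow> 'v \<Rightarrow> real" where
  "hdir q a x = Inf ((\<lambda>t. q (x + t *\<^sub>R a) - t * q a) ` {0..})"

lemma hdir_lb:
  assumes "sublin q" "t \<ge> 0"
  shows "- q (- x) \<le> q (x + t *\<^sub>R a) - t * q a"
proof -
  have "q (t *\<^sub>R a) \<le> q (x + t *\<^sub>R a) + q (- x)"
    using sublin_add[OF assms(1), of "x + t *\<^sub>R a" "-x"] by simp
  thus ?thesis using sublin_scale[OF assms] by simp
qed

lemma hdir_bdd: "sublin q \<Longrightarrow> bdd_below ((\<lambda>t. q (x + t *\<^sub>R a) - t * q a) ` {0..})"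
  unfolding bdd_below_def using hdir_lb by fastforce

lemma hdir_le: "sublin q \<Longrightarrow> t \<ge> 0 \<Longrightarrow> hdir q a x \<le> q (x + t *\<^sub>R a) - t * q a"
  unfolding hdir_def by (rule cInf_lower[OF _ hdir_bdd]) auto

lemma hdir_ge: "(\<And>t. t \<ge> 0 \<Longrightarrow> L \<le> q (x + t *\<^sub>R a) - t * q a) \<Longrightarrow> L \<le> hdir q a x"
  unfolding hdir_def by (rule cInf_greatest) auto

lemma hdir_le_q: "sublin q \<Longrightarrow> hdir q a x \<le> q x"
  using hdir_le[of q 0 a x] by simp

lemma hdir_neg: "sublin q \<Longrightarrow> hdir q a (- a) \<le> - q a"
  using hdir_le[of q 1 a "-a"] sublin_0[of q] by simp

lemma hdir_sublin:
  assumes q: "sublin q"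
  shows "sublin (hdir q a)"
proof -
  have add: "hdir q a (x + y) \<le> hdir q a x + hdir q a y" for x y
  proof -
    have 1: "hdir q a (x + y) \<le> (q (x + s *\<^sub>R a) - s * q a) + (q (y + t *\<^sub>R a) - t * q a)"
      if "s \<ge> 0" "t \<ge> 0" for s t
    proof -
      have "hdir q a (x + y) \<le> q (x + y + (s + t) *\<^sub>R a) - (s + t) * q a"
        using hdir_le[OF q, of "s+t"] that by simp
      also have "q (x + y + (s + t) *\<^sub>R a) \<le> q (x + s *\<^sub>R a) + q (y + t *\<^sub>R a)"
        using sublin_add[OF q, of "x + s *\<^sub>R a" "y + t *\<^sub>R a"]
        by (simp add: algebra_simps scaleR_add_left)
      finally show ?thesis by (simp add: algebra_simps)
    qed
    have 2: "hdir q a (x + y) - (q (y + t *\<^sub>R a) - t * q a) \<le> hdir q a x" if "t \<ge> 0" for t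
      by (rule hdir_ge) (use 1 that in fastforce)
    have "hdir q a (x + y) - hdir q a x \<le> hdir q a y"
      by (rule hdir_ge) (use 2 in fastforce)
    thus ?thesis by simp
  qed
  have le: "hdir q a (c *\<^sub>R x) \<le> c * hdir q a x" if "c > 0" for c x
  proof -
    have "hdir q a (c *\<^sub>R x) / c \<le> hdir q a x"
    proof (rule hdir_ge)
      fix t :: real assume "t \<ge> 0"
      have "hdir q a (c *\<^sub>R x) \<le> q (c *\<^sub>R x + (c * t) *\<^sub>R a) - (c * t) * q a"
        using hdir_le[OF q, of "c*t"] \<open>t \<ge> 0\<close> that by simp
      also have "q (c *\<^sub>R x + (c * t) *\<^sub>R a) = c * q (x + t *\<^sub>R a)"
        using sublin_scale[OF q, of c "x + t *\<^sub>R a"] that by (simp add: scaleR_add_right)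
      finally show "hdir q a (c *\<^sub>R x) / c \<le> q (x + t *\<^sub>R a) - t * q a"
        using that by (simp add: divide_simps algebra_simps)
    qed
    thus ?thesis using that by (simp add: divide_simps mult.commute)
  qed
  have sc: "hdir q a (c *\<^sub>R x) = c * hdir q a x" if "c \<ge> 0" for c x
  proof (cases "c = 0")
    case True
    have "hdir q a 0 = 0"
    proof (rule antisym)
      show "hdir q a 0 \<le> 0" using hdir_le_q[OF q, of a 0] sublin_0[OF q] by simp
      show "0 \<le> hdir q a 0" by (rule hdir_ge) (simp add: sublin_scale[OF q])
    qed
    thus ?thesis using True by simp
  next
    case False
    with that have c: "c > 0" by simp
    have "hdir q a x \<le> (1/c) * hdir q a (c *\<^sub>R x)"
      using le[of "1/c" "c *\<^sub>R x"] c by simp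
    hence "c * hdir q a x \<le> hdir q a (c *\<^sub>R x)" using c by (simp add: field_simps)
    thus ?thesis using le[OF c, of x] by simp
  qed
  show ?thesis unfolding sublin_def using add sc by blast
qed

lemma zorn_min:
  fixes p :: "'v::real_vector \<Rightarrow> real"
  assumes p: "sublin p"
  shows "\<exists>m. sublin m \<and> (\<forall>x. m x \<le> p x) \<and> (\<forall>q. sublin q \<and> (\<forall>x. q x \<le> m x) \<longrightarrow> q = m)"
proof -
  define A where "A = {q. sublin q \<and> (\<forall>x. q x \<le> p x)}"
  define P where "P = (\<lambda>q1 q2::'v \<Rightarrow> real. \<forall>x. q2 x \<le> q1 x)"
  have po: "partial_order_on A (relation_of P A)"
    unfolding partial_order_on_def preorder_on_def refl_on_def trans_def antisym_def relation_of_def P_def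
    by (auto intro!: ext intro: order_trans antisym)
  have ch: "\<exists>u \<in> A. \<forall>a \<in> C. P a u" if C: "C \<in> Chains (relation_of P A)" for C
  proof (cases "C = {}")
    case True
    thus ?thesis using p unfolding A_def by auto
  next
    case False
    have CA: "C \<subseteq> A" using Chains_relation_of[OF C] .
    have comp: "\<forall>x. q1 x \<le> q2 x \<or> (\<forall>x. q2 x \<le> q1 x)" if "q1 \<in> C" "q2 \<in> C" for q1 q2
      using C that unfolding Chains_def relation_of_def P_def by blast
    have comp': "(\<forall>x. q1 x \<le> q2 x) \<or> (\<forall>x. q2 x \<le> q1 x)" if "q1 \<in> C" "q2 \<in> C" for q1 q2
      using C that unfolding Chains_def relation_of_def P_def by blast
    define u where "u x = Inf ((\<lambda>q. q x) ` C)" for x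
    have bdd: "bdd_below ((\<lambda>q. q x) ` C)" for x
    proof -
      have "- p (- x) \<le> q x" if "q \<in> C" for q
      proof -
        have "sublin q" "q (-x) \<le> p (-x)" using CA that unfolding A_def by auto
        thus ?thesis using sublin_neg[of q x] by simp
      qed
      thus ?thesis unfolding bdd_below_def by blast
    qed
    have ule: "u x \<le> q x" if "q \<in> C" for q x
      unfolding u_def by (rule cInf_lower) (use that bdd in auto)
    have uge: "L \<le> u x" if "\<And>q. q \<in> C \<Longrightarrow> L \<le> q x" for L x
      unfolding u_def by (rule cInf_greatest) (use that False in auto)
    have qs: "sublin q" if "q \<in> C" for q using CA that unfolding A_def by auto
    have "sublin u"
    proof -
      have add: "u (x + y) \<le> u x + u y" for x y
      proof -
        have 1: "u (x + y) \<le> q1 x + q2 y" if q12: "q1 \<in> C" "q2 \<in> C" for q1 q2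
        proof -
          have "\<exists>q. q \<in> C \<and> q x \<le> q1 x \<and> q y \<le> q2 y"
          proof (cases "\<forall>x. q1 x \<le> q2 x")
            case True thus ?thesis using q12 by (intro exI[of _ q1]) auto
          next
            case False thus ?thesis using comp'[OF q12] q12 by (intro exI[of _ q2]) auto
          qed
          then obtain q where q: "q \<in> C" "q x \<le> q1 x" "q y \<le> q2 y" by blast
          have "u (x + y) \<le> q (x + y)" using ule q by blast
          also have "\<dots> \<le> q x + q y" using sublin_add[OF qs[OF q(1)]] .
          finally show ?thesis using q by simp
        qed
        have 2: "u (x + y) - q2 y \<le> u x" if "q2 \<in> C" for q2
          by (rule uge) (use 1 that in fastforce)
        have "u (x + y) - u x \<le> u y" by (rule uge) (use 2 in fastforce)
        thus ?thesis by simp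
      qed
      have le: "u (c *\<^sub>R x) \<le> c * u x" if c: "c > 0" for c x
      proof -
        have "u (c *\<^sub>R x) / c \<le> u x"
          by (rule uge) (use c ule sublin_scale[OF qs] in \<open>fastforce simp: divide_simps mult.commute\<close>)
        thus ?thesis using c by (simp add: field_simps)
      qed
      have sc: "u (c *\<^sub>R x) = c * u x" if "c \<ge> 0" for c x
      proof (cases "c = 0")
        case True
        have "u 0 = 0"
        proof (rule antisym)
          obtain q where "q \<in> C" using False by blast
          thus "u 0 \<le> 0" using ule[of q 0] sublin_0[OF qs[of q]] by simp
          show "0 \<le> u 0" by (rule uge) (simp add: sublin_0[OF qs])
        qed
        thus ?thesis using True by simp
      next
        case False
        with that have c: "c > 0" by simp
        have "u x \<le> (1/c) * u (c *\<^sub>R x)" using le[of "1/c" "c *\<^sub>R x"] c by simp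
        hence "c * u x \<le> u (c *\<^sub>R x)" using c by (simp add: field_simps)
        thus ?thesis using le[OF c, of x] by simp
      qed
      show ?thesis unfolding sublin_def using add sc by blast
    qed
    moreover have "u x \<le> p x" for x
    proof -
      obtain q where "q \<in> C" using False by blast
      hence "u x \<le> q x" "q x \<le> p x" using ule[of q x] CA unfolding A_def by auto
      thus ?thesis by linarith
    qed
    ultimately have "u \<in> A" unfolding A_def by blast
    moreover have "\<forall>a \<in> C. P a u" unfolding P_def using ule by blast
    ultimately show ?thesis by blast
  qed
  obtain m where m: "m \<in> A" "\<forall>a\<in>A. P m a \<longrightarrow> a = m"
    using predicate_Zorn[OF po ch] by blast
  show ?thesis
    apply (rule exI[of _ m])
    using m unfolding A_def P_def by (auto intro: order_trans)
qed

lemma min_linear: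
  fixes m :: "'v::real_vector \<Rightarrow> real"
  assumes m: "sublin m" and min: "\<forall>q. sublin q \<and> (\<forall>x. q x \<le> m x) \<longrightarrow> q = m"
  shows "linear m"
proof -
  have neg: "m (- a) = - m a" for a
  proof -
    have "hdir m a = m" using min hdir_sublin[OF m] hdir_le_q[OF m] by blast
    hence "m (-a) \<le> - m a" using hdir_neg[OF m, of a] by simp
    thus ?thesis using sublin_neg[OF m, of a] by simp
  qed
  have add: "m (x + y) = m x + m y" for x y
  proof -
    have "m x \<le> m (x + y) + m (- y)" using sublin_add[OF m, of "x+y" "-y"] by simp
    thus ?thesis using sublin_add[OF m, of x y] neg[of y] by simp
  qed
  have sc: "m (c *\<^sub>R x) = c * m x" for c x
  proof (cases "c \<ge> 0")
    case True thus ?thesis using sublin_scale[OF m] by simp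
  next
    case False
    have "m (c *\<^sub>R x) = m ((-c) *\<^sub>R (-x))" by simp
    also have "\<dots> = (-c) * m (-x)" using False sublin_scale[OF m, of "-c" "-x"] by simp
    finally show ?thesis using neg[of x] by simp
  qed
  show ?thesis by (rule linearI) (use add sc in auto)
qed

theorem hahn_banach:
  fixes p :: "'v::real_vector \<Rightarrow> real"
  assumes p: "sublin p"
  shows "\<exists>L. linear L \<and> (\<forall>x. L x \<le> p x) \<and> p x0 \<le> L x0"
proof -
  have p': "sublin (hdir p x0)" using hdir_sublin[OF p] .
  obtain m where m: "sublin m" "\<forall>x. m x \<le> hdir p x0 x"
    "\<forall>q. sublin q \<and> (\<forall>x. q x \<le> m x) \<longrightarrow> q = m"
    using zorn_min[OF p'] by blast
  have lin: "linear m" using min_linear[OF m(1) m(3)] .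
  have "m (- x0) \<le> - p x0" using m(2) hdir_neg[OF p, of x0] by (meson order_trans)
  hence "p x0 \<le> m x0" using linear_neg[OF lin, of x0] by simp
  moreover have "\<forall>x. m x \<le> p x" using m(2) hdir_le_q[OF p] by (meson order_trans)
  ultimately show ?thesis using lin by blast
qed



definition ltvs :: "'v::real_vector topology \<Rightarrow> bool" where
  "ltvs \<sigma> \<longleftrightarrow> topspace \<sigma> = UNIV
     \<and> continuous_map (prod_topology \<sigma> \<sigma>) \<sigma> (\<lambda>(x, y). x + y)
     \<and> continuous_map (prod_topology euclideanreal \<sigma>) \<sigma> (\<lambda>(a, x). a *\<^sub>R x)
     \<and> (\<forall>U. openin \<sigma> U \<and> 0 \<in> U \<longrightarrow> (\<exists>V. openin \<sigma> V \<and> convex V \<and> 0 \<in> V \<and> V \<subseteq> U))"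

lemma ltvs_top: "ltvs \<sigma> \<Longrightarrow> topspace \<sigma> = UNIV" unfolding ltvs_def by blast
lemma ltvs_add: "ltvs \<sigma> \<Longrightarrow> continuous_map (prod_topology \<sigma> \<sigma>) \<sigma> (\<lambda>(x, y). x + y)"
  unfolding ltvs_def by blast
lemma ltvs_mul: "ltvs \<sigma> \<Longrightarrow> continuous_map (prod_topology euclideanreal \<sigma>) \<sigma> (\<lambda>(a, x). a *\<^sub>R x)"
  unfolding ltvs_def by blast
lemma ltvs_base: "ltvs \<sigma> \<Longrightarrow> openin \<sigma> U \<Longrightarrow> 0 \<in> U \<Longrightarrow> \<exists>V. openin \<sigma> V \<and> convex V \<and> 0 \<in> V \<and> V \<subseteq> U"
  unfolding ltvs_def by blast

lemma ltvs_comb: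
  assumes s: "ltvs \<sigma>" and f: "continuous_map X \<sigma> f" and g: "continuous_map X \<sigma> g"
  shows "continuous_map X \<sigma> (\<lambda>x. f x + g x)"
proof -
  have "continuous_map X (prod_topology \<sigma> \<sigma>) (\<lambda>x. (f x, g x))"
    using f g by (simp add: continuous_map_pairwise o_def)
  from continuous_map_compose[OF this ltvs_add[OF s]] show ?thesis by (simp add: o_def)
qed

lemma ltvs_smul:
  assumes s: "ltvs \<sigma>" and f: "continuous_map X euclideanreal f" and g: "continuous_map X \<sigma> g"
  shows "continuous_map X \<sigma> (\<lambda>x. f x *\<^sub>R g x)"
proof -
  have "continuous_map X (prod_topology euclideanreal \<sigma>) (\<lambda>x. (f x, g x))"
    using f g by (simp add: continuous_map_pairwise o_def)
  from continuous_map_compose[OF this ltvs_mul[OF s]] show ?thesis by (simp add: o_def)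
qed

lemma ltvs_const: "ltvs \<sigma> \<Longrightarrow> continuous_map X \<sigma> (\<lambda>x. a)"
  using ltvs_top[of \<sigma>] by simp

lemma ltvs_affine: "ltvs \<sigma> \<Longrightarrow> continuous_map \<sigma> \<sigma> (\<lambda>v. a + c *\<^sub>R v)"
  apply (rule ltvs_comb, assumption, rule ltvs_const, assumption)
  apply (rule ltvs_smul, assumption, simp)
  using continuous_map_id[unfolded id_def] .

lemma ltvs_line: "ltvs \<sigma> \<Longrightarrow> continuous_map euclideanreal \<sigma> (\<lambda>t. a + t *\<^sub>R b)"
  apply (rule ltvs_comb, assumption, rule ltvs_const, assumption)
  apply (rule ltvs_smul, assumption)
  using continuous_map_id[unfolded id_def] apply assumption
  by (rule ltvs_const)

lemma ltvs_open_preimage: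
  assumes s: "ltvs \<sigma>" and U: "openin \<sigma> U"
  shows "openin \<sigma> {v. a + c *\<^sub>R v \<in> U}"
  using openin_continuous_map_preimage[OF ltvs_affine[OF s] U] ltvs_top[OF s] by simp

lemma ltvs_open_image:
  assumes s: "ltvs \<sigma>" and U: "openin \<sigma> U" and c: "c \<noteq> 0"
  shows "openin \<sigma> ((\<lambda>v. a + c *\<^sub>R v) ` U)"
proof -
  have eq: "(\<lambda>v. a + c *\<^sub>R v) ` U = {v. (- (1/c) *\<^sub>R a) + (1/c) *\<^sub>R v \<in> U}"
  proof (intro set_eqI iffI)
    fix v assume "v \<in> (\<lambda>v. a + c *\<^sub>R v) ` U"
    then obtain u where "u \<in> U" "v = a + c *\<^sub>R u" by blast
    thus "v \<in> {v. (- (1/c) *\<^sub>R a) + (1/c) *\<^sub>R v \<in> U}" using c by (simp add: algebra_simps)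
  next
    fix v assume "v \<in> {v. (- (1/c) *\<^sub>R a) + (1/c) *\<^sub>R v \<in> U}"
    hence "(- (1/c) *\<^sub>R a) + (1/c) *\<^sub>R v \<in> U" by simp
    moreover have "v = a + c *\<^sub>R ((- (1/c) *\<^sub>R a) + (1/c) *\<^sub>R v)" using c by (simp add: algebra_simps)
    ultimately show "v \<in> (\<lambda>v. a + c *\<^sub>R v) ` U" by blast
  qed
  show ?thesis by (subst eq) (rule ltvs_open_preimage[OF s U])
qed

lemma ltvs_line_open:
  assumes s: "ltvs \<sigma>" and U: "openin \<sigma> U" and x: "a + t0 *\<^sub>R b \<in> U"
  shows "\<exists>\<delta>>0. \<forall>t. \<bar>t - t0\<bar> < \<delta> \<longrightarrow> a + t *\<^sub>R b \<in> U"
proof -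
  have c: "continuous_map euclideanreal \<sigma> (\<lambda>t. a + t *\<^sub>R b)" using ltvs_line[OF s] .
  note X = openin_continuous_map_preimage[OF c U]
  have eq: "{x \<in> topspace euclideanreal. a + x *\<^sub>R b \<in> U} = {t. a + t *\<^sub>R b \<in> U}" by auto
  have o: "open {t. a + t *\<^sub>R b \<in> U}" using X eq open_openin by metis
  have t0: "t0 \<in> {t. a + t *\<^sub>R b \<in> U}" using x by simp
  obtain \<delta> where d: "\<delta> > 0" "ball t0 \<delta> \<subseteq> {t. a + t *\<^sub>R b \<in> U}"
    using o[unfolded open_contains_ball] t0 by blast
  have "a + t *\<^sub>R b \<in> U" if "\<bar>t - t0\<bar> < \<delta>" for t
  proof -
    have "t \<in> ball t0 \<delta>" using that by (simp add: dist_real_def abs_less_iff)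
    thus ?thesis using d(2) by blast
  qed
  thus ?thesis using d(1) by blast
qed

lemma ltvs_absorb:
  assumes s: "ltvs \<sigma>" and U: "openin \<sigma> U" and "0 \<in> U"
  shows "\<exists>\<delta>>0. \<forall>t. \<bar>t\<bar> < \<delta> \<longrightarrow> t *\<^sub>R x \<in> U"
  using ltvs_line_open[OF s U, of 0 0 x] assms(3) by simp


section \<open>Minkowski functional\<close>

definition mink :: "'v::real_vector set \<Rightarrow> 'v \<Rightarrow> real" where
  "mink U x = Inf {t. 0 < t \<and> (1/t) *\<^sub>R x \<in> U}"

locale mk =
  fixes \<sigma> :: "'v::real_vector topology" and U :: "'v set"
  assumes s: "ltvs \<sigma>" and U: "openin \<sigma> U" and cU: "convex U" and U0: "0 \<in> U"
begin

lemma ne: "{t. 0 < t \<and> (1/t) *\<^sub>R x \<in> U} \<noteq> {}"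
proof -
  obtain \<delta> where d: "\<delta> > 0" "\<forall>t. \<bar>t\<bar> < \<delta> \<longrightarrow> t *\<^sub>R x \<in> U" using ltvs_absorb[OF s U U0] by blast
  have "(1 / (2/\<delta>)) *\<^sub>R x \<in> U" using d by auto
  moreover have "0 < 2/\<delta>" using d by simp
  ultimately show ?thesis by blast
qed

lemma bdd: "bdd_below {t. 0 < t \<and> (1/t) *\<^sub>R x \<in> U}"
  unfolding bdd_below_def by (rule exI[of _ 0]) auto

lemma upward: assumes "0 < t" "(1/t) *\<^sub>R x \<in> U" "t \<le> t'" shows "(1/t') *\<^sub>R x \<in> U"
proof -
  have t': "t' > 0" using assms by simp
  have "(t/t') *\<^sub>R ((1/t) *\<^sub>R x) + (1 - t/t') *\<^sub>R 0 \<in> U"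
    using cU assms t' U0 unfolding convex_def by (intro cU[unfolded convex_def, rule_format]) (auto simp: divide_simps)
  thus ?thesis using assms(1) by simp
qed

lemma nonneg: "0 \<le> mink U x"
  unfolding mink_def by (rule cInf_greatest[OF ne]) auto

lemma less_mem: assumes "mink U x < t" shows "(1/t) *\<^sub>R x \<in> U"
proof -
  obtain s where "0 < s" "(1/s) *\<^sub>R x \<in> U" "s < t"
    using assms unfolding mink_def cInf_less_iff[OF ne bdd] by blast
  thus ?thesis using upward by auto
qed

lemma le: "0 < t \<Longrightarrow> (1/t) *\<^sub>R x \<in> U \<Longrightarrow> mink U x \<le> t"
  unfolding mink_def by (rule cInf_lower[OF _ bdd]) auto

lemma in_lt1: assumes "x \<in> U" shows "mink U x < 1"
proof -
  obtain \<delta> where d: "\<delta> > 0" "\<forall>t. \<bar>t - 1\<bar> < \<delta> \<longrightarrow> 0 + t *\<^sub>R x \<in> U"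
    using ltvs_line_open[OF s U, of 0 1 x] assms by auto
  define t where "t = 1 + \<delta>/2"
  have "t *\<^sub>R x \<in> U" using d unfolding t_def by auto
  hence "mink U x \<le> 1/t" using le[of "1/t" x] unfolding t_def using d by simp
  also have "1/t < 1" unfolding t_def using d by simp
  finally show ?thesis .
qed

lemma notin_ge1: assumes "x \<notin> U" shows "1 \<le> mink U x"
  using less_mem[of x 1] assms by force

lemma sublin: "sublin (mink U)"
proof -
  have add: "mink U (x + y) \<le> mink U x + mink U y" for x y
  proof (rule field_le_epsilon)
    fix e :: real assume e: "e > 0"
    define a where "a = mink U x + e/2"
    define b where "b = mink U y + e/2"
    have a: "a > 0" "(1/a) *\<^sub>R x \<in> U" using less_mem[of x a] nonneg[of x] e unfolding a_def by auto
    have b: "b > 0" "(1/b) *\<^sub>R y \<in> U" using less_mem[of y b] nonneg[of y] e unfolding b_def by auto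
    have "(a/(a+b)) *\<^sub>R ((1/a) *\<^sub>R x) + (b/(a+b)) *\<^sub>R ((1/b) *\<^sub>R y) \<in> U"
      using a b by (intro cU[unfolded convex_def, rule_format]) (auto simp: divide_simps)
    moreover have "(a/(a+b)) *\<^sub>R ((1/a) *\<^sub>R x) + (b/(a+b)) *\<^sub>R ((1/b) *\<^sub>R y) = (1/(a+b)) *\<^sub>R (x + y)"
      using a b by (simp add: scaleR_add_right)
    ultimately have "mink U (x + y) \<le> a + b" using le[of "a+b" "x+y"] a b by simp
    thus "mink U (x + y) \<le> mink U x + mink U y + e" unfolding a_def b_def by simp
  qed
  have lec: "mink U (c *\<^sub>R x) \<le> c * mink U x" if c: "c > 0" for c x
  proof -
    have "mink U (c *\<^sub>R x) / c \<le> mink U x"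
    proof (rule field_le_epsilon)
      fix e :: real assume e: "e > 0"
      define t where "t = mink U x + e"
      have t: "t > 0" "(1/t) *\<^sub>R x \<in> U" using less_mem[of x t] nonneg[of x] e unfolding t_def by auto
      have "(1/(c*t)) *\<^sub>R (c *\<^sub>R x) \<in> U" using t c by simp
      hence "mink U (c *\<^sub>R x) \<le> c * t" using le[of "c*t"] t c by simp
      thus "mink U (c *\<^sub>R x) / c \<le> mink U x + e" using c unfolding t_def by (simp add: divide_simps mult.commute)
    qed
    thus ?thesis using c by (simp add: divide_simps mult.commute)
  qed
  have sc: "mink U (c *\<^sub>R x) = c * mink U x" if "c \<ge> 0" for c x
  proof (cases "c = 0")
    case True
    have "mink U 0 = 0"
    proof (rule antisym)
      show "0 \<le> mink U 0" by (rule nonneg)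
      show "mink U 0 \<le> 0"
      proof (rule field_le_epsilon)
        fix e :: real assume "e > 0" thus "mink U 0 \<le> 0 + e" using le[of e 0] U0 by simp
      qed
    qed
    thus ?thesis using True by simp
  next
    case False
    with that have c: "c > 0" by simp
    have "mink U x \<le> (1/c) * mink U (c *\<^sub>R x)" using lec[of "1/c" "c *\<^sub>R x"] c by simp
    hence "c * mink U x \<le> mink U (c *\<^sub>R x)" using c by (simp add: field_simps)
    thus ?thesis using lec[OF c, of x] by simp
  qed
  show ?thesis unfolding sublin_def using add sc by blast
qed

end

lemma linear_cont:
  assumes s: "ltvs \<sigma>" and L: "linear L" and V: "openin \<sigma> V" "0 \<in> V" and b: "\<forall>v\<in>V. \<bar>L v\<bar> < 1"
  shows "continuous_map \<sigma> euclideanreal L"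
  unfolding continuous_map_def
proof (intro conjI allI impI)
  show "L \<in> topspace \<sigma> \<rightarrow> topspace euclideanreal" by simp
  fix W assume "openin euclideanreal W"
  hence W: "open W" using open_openin by metis
  show "openin \<sigma> {x \<in> topspace \<sigma>. L x \<in> W}"
  proof (subst openin_subopen, intro ballI)
    fix x0 assume x0: "x0 \<in> {x \<in> topspace \<sigma>. L x \<in> W}"
    then obtain d where d: "d > 0" "ball (L x0) d \<subseteq> W" using W open_contains_ball by blast
    define N where "N = (\<lambda>v. x0 + d *\<^sub>R v) ` V"
    have "openin \<sigma> N" unfolding N_def using ltvs_open_image[OF s V(1)] d by simp
    moreover have "x0 \<in> N" unfolding N_def using V(2) by force
    moreover have "N \<subseteq> {x \<in> topspace \<sigma>. L x \<in> W}"
    proof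
      fix y assume "y \<in> N"
      then obtain v where v: "v \<in> V" "y = x0 + d *\<^sub>R v" unfolding N_def by blast
      have "L y = L x0 + d * L v" using v L by (simp add: linear_add linear_scale)
      hence "dist (L x0) (L y) < d" using b v(1) d by (simp add: dist_real_def abs_mult)
      thus "y \<in> {x \<in> topspace \<sigma>. L x \<in> W}" using d ltvs_top[OF s] by auto
    qed
    ultimately show "\<exists>T. openin \<sigma> T \<and> x0 \<in> T \<and> T \<subseteq> {x \<in> topspace \<sigma>. L x \<in> W}" by blast
  qed
qed


lemma sep_open:
  assumes s: "ltvs \<sigma>" and A: "openin \<sigma> A" "convex A" "A \<noteq> {}"
    and B: "convex B" and AB: "A \<inter> B = {}"
  shows "\<exists>L. linear L \<and> continuous_map \<sigma> euclideanreal L \<and> (\<forall>a\<in>A. \<forall>b\<in>B. L b < L a)"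
proof (cases "B = {}")
  case True
  have "linear (\<lambda>x::'a. 0::real)" by (simp add: linear_zero)
  moreover have "continuous_map \<sigma> euclideanreal (\<lambda>x. 0::real)" by simp
  ultimately show ?thesis using True by blast
next
  case False
  obtain a0 b0 where ab0: "a0 \<in> A" "b0 \<in> B" using A(3) False by blast
  define w0 where "w0 = a0 - b0"
  define U where "U = (\<Union>b\<in>B. (\<lambda>v. (w0 + b) + (-1) *\<^sub>R v) ` A)"
  have Uiff: "z \<in> U \<longleftrightarrow> (\<exists>a\<in>A. \<exists>b\<in>B. z = w0 - a + b)" for z
  proof
    assume "z \<in> U"
    then obtain a b where "a \<in> A" "b \<in> B" "z = (w0 + b) + (-1) *\<^sub>R a" unfolding U_def by blast
    thus "\<exists>a\<in>A. \<exists>b\<in>B. z = w0 - a + b" by (intro bexI[of _ a] bexI[of _ b]) (auto simp: algebra_simps)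
  next
    assume "\<exists>a\<in>A. \<exists>b\<in>B. z = w0 - a + b"
    then obtain a b where ab: "a \<in> A" "b \<in> B" "z = w0 - a + b" by blast
    hence "z = (w0 + b) + (-1) *\<^sub>R a" by (simp add: algebra_simps)
    thus "z \<in> U" unfolding U_def using ab by blast
  qed
  have "\<forall>b\<in>B. openin \<sigma> ((\<lambda>v. (w0 + b) + (-1) *\<^sub>R v) ` A)"
    by (intro ballI ltvs_open_image[OF s A(1)]) simp
  hence Uo: "openin \<sigma> U" unfolding U_def
    by (intro openin_Union) blast
  have Uc: "convex U"
  proof (rule convexI)
    fix x y :: 'a and u v :: real assume xy: "x \<in> U" "y \<in> U" and uv': "0 \<le> u" "0 \<le> v" "u + v = 1"
    have uv: "0 \<le> u \<and> 0 \<le> v \<and> u + v = 1" using uv' by blast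
    obtain a1 b1 where 1: "a1 \<in> A" "b1 \<in> B" "x = w0 - a1 + b1" using xy(1) Uiff by blast
    obtain a2 b2 where 2: "a2 \<in> A" "b2 \<in> B" "y = w0 - a2 + b2" using xy(2) Uiff by blast
    have "u *\<^sub>R a1 + v *\<^sub>R a2 \<in> A" using A(2) 1 2 uv unfolding convex_def by blast
    moreover have "u *\<^sub>R b1 + v *\<^sub>R b2 \<in> B" using B 1 2 uv unfolding convex_def by blast
    moreover have "u *\<^sub>R x + v *\<^sub>R y = w0 - (u *\<^sub>R a1 + v *\<^sub>R a2) + (u *\<^sub>R b1 + v *\<^sub>R b2)"
    proof -
      have "u *\<^sub>R x + v *\<^sub>R y = (u + v) *\<^sub>R w0 - (u *\<^sub>R a1 + v *\<^sub>R a2) + (u *\<^sub>R b1 + v *\<^sub>R b2)"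
        unfolding 1 2 by (simp add: algebra_simps)
      thus ?thesis using uv by simp
    qed
    ultimately show "u *\<^sub>R x + v *\<^sub>R y \<in> U" using Uiff by blast
  qed
  have U0: "0 \<in> U" using Uiff ab0 unfolding w0_def by force
  have w0U: "w0 \<notin> U"
  proof
    assume "w0 \<in> U"
    then obtain a b where "a \<in> A" "b \<in> B" "w0 = w0 - a + b" using Uiff by blast
    hence "a \<in> A \<inter> B" by (simp add: algebra_simps)
    thus False using AB by blast
  qed
  interpret mk \<sigma> U using s Uo Uc U0 by unfold_locales
  obtain L where L: "linear L" "\<forall>x. L x \<le> mink U x" "mink U w0 \<le> L w0"
    using hahn_banach[OF sublin] by blast
  have Lw0: "1 \<le> L w0" using notin_ge1[OF w0U] L(3) by simp
  have sepp: "L b < L a" if "a \<in> A" "b \<in> B" for a b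
  proof -
    have "w0 - a + b \<in> U" using Uiff that by blast
    hence "L (w0 - a + b) < 1" using in_lt1 L(2) by (meson le_less_trans)
    hence "L w0 - L a + L b < 1" using L(1) by (simp add: linear_add linear_diff)
    thus ?thesis using Lw0 by simp
  qed
  define V where "V = U \<inter> (\<lambda>v. 0 + (-1) *\<^sub>R v) ` U"
  have "openin \<sigma> V" unfolding V_def using Uo ltvs_open_image[OF s Uo, of "-1" 0] by (simp add: openin_Int)
  moreover have "0 \<in> V" unfolding V_def using U0 by force
  moreover have "\<forall>v\<in>V. \<bar>L v\<bar> < 1"
  proof
    fix v assume "v \<in> V"
    then have v: "v \<in> U" "- v \<in> U" unfolding V_def by auto
    have "L v < 1" using in_lt1[OF v(1)] L(2) by (meson le_less_trans)
    moreover have "L (- v) < 1" using in_lt1[OF v(2)] L(2) by (meson le_less_trans)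
    ultimately show "\<bar>L v\<bar> < 1" using linear_neg[OF L(1), of v] by simp
  qed
  ultimately have "continuous_map \<sigma> euclideanreal L" using linear_cont[OF s L(1)] by blast
  thus ?thesis using L(1) sepp by blast
qed

lemma nbhd_half:
  assumes s: "ltvs \<sigma>" and N: "openin \<sigma> N" "0 \<in> N"
  shows "\<exists>M. openin \<sigma> M \<and> convex M \<and> 0 \<in> M \<and> (\<forall>a\<in>M. \<forall>b\<in>M. a + b \<in> N)"
proof -
  define P where "P = {z \<in> topspace (prod_topology \<sigma> \<sigma>). (\<lambda>(x, y). x + y) z \<in> N}"
  have Po: "openin (prod_topology \<sigma> \<sigma>) P" unfolding P_def
    by (rule openin_continuous_map_preimage[OF ltvs_add[OF s] N(1)])
  have P00: "(0, 0) \<in> P" unfolding P_def using N(2) by (simp add: ltvs_top[OF s])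
  obtain W1 W2 where W: "openin \<sigma> W1" "openin \<sigma> W2" "0 \<in> W1" "0 \<in> W2" "W1 \<times> W2 \<subseteq> P"
    using Po[unfolded openin_prod_topology_alt, rule_format, OF P00] by blast
  have "openin \<sigma> (W1 \<inter> W2)" using W by (simp add: openin_Int)
  then obtain M where M: "openin \<sigma> M" "convex M" "0 \<in> M" "M \<subseteq> W1 \<inter> W2"
    using ltvs_base[OF s, of "W1 \<inter> W2"] W(3,4) by blast
  have "a + b \<in> N" if "a \<in> M" "b \<in> M" for a b
  proof -
    have "(a, b) \<in> P" using W(5) M(4) that by blast
    thus ?thesis unfolding P_def by simp
  qed
  thus ?thesis using M by blast
qed

lemma sep_compact:
  assumes s: "ltvs \<sigma>" and K: "compactin \<sigma> K" "convex K" "K \<noteq> {}"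
    and E: "convex E" and KE: "\<forall>k\<in>K. \<exists>V. openin \<sigma> V \<and> k \<in> V \<and> V \<inter> E = {}"
  shows "\<exists>L c. linear L \<and> continuous_map \<sigma> euclideanreal L \<and> (\<forall>k\<in>K. c < L k) \<and> (\<forall>e\<in>E. L e < c)"
proof (cases "E = {}")
  case True
  have "linear (\<lambda>x::'a. 0::real)" by (simp add: linear_zero)
  moreover have "continuous_map \<sigma> euclideanreal (\<lambda>x. 0::real)" by simp
  ultimately show ?thesis using True by (intro exI[of _ "\<lambda>x. 0"] exI[of _ "-1"]) auto
next
  case Ene: False
  obtain V where V: "\<And>k. k \<in> K \<Longrightarrow> openin \<sigma> (V k) \<and> k \<in> V k \<and> V k \<inter> E = {}"
    using KE by metis
  have H: "\<forall>k\<in>K. \<exists>M. openin \<sigma> M \<and> convex M \<and> 0 \<in> M \<and> (\<forall>a\<in>M. \<forall>b\<in>M. k + (a + b) \<in> V k)"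
  proof
    fix k assume k: "k \<in> K"
    have "openin \<sigma> {v. k + 1 *\<^sub>R v \<in> V k}" using ltvs_open_preimage[OF s] V[OF k] by blast
    moreover have "0 \<in> {v. k + 1 *\<^sub>R v \<in> V k}" using V[OF k] by simp
    ultimately obtain M where M: "openin \<sigma> M" "convex M" "0 \<in> M"
      "\<forall>a\<in>M. \<forall>b\<in>M. a + b \<in> {v. k + 1 *\<^sub>R v \<in> V k}"
      using nbhd_half[OF s] by blast
    have "\<forall>a\<in>M. \<forall>b\<in>M. k + (a + b) \<in> V k" using M(4) by simp
    thus "\<exists>M. openin \<sigma> M \<and> convex M \<and> 0 \<in> M \<and> (\<forall>a\<in>M. \<forall>b\<in>M. k + (a + b) \<in> V k)"
      using M(1-3) by blast
  qed
  obtain M where M': "\<forall>k\<in>K. openin \<sigma> (M k) \<and> convex (M k) \<and> 0 \<in> M k \<and> (\<forall>a\<in>M k. \<forall>b\<in>M k. k + (a + b) \<in> V k)"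
    using bchoice[OF H] by blast
  have M: "\<And>k. k \<in> K \<Longrightarrow> openin \<sigma> (M k) \<and> convex (M k) \<and> 0 \<in> M k \<and> (\<forall>a\<in>M k. \<forall>b\<in>M k. k + (a + b) \<in> V k)"
    using M' by blast
  define Ok where "Ok k = {v. (-k) + 1 *\<^sub>R v \<in> M k}" for k
  have Oo: "openin \<sigma> (Ok k)" if "k \<in> K" for k
    unfolding Ok_def using ltvs_open_preimage[OF s] M[OF that] by blast
  have KO: "K \<subseteq> \<Union>(Ok ` K)" unfolding Ok_def using M by force
  obtain F where F: "finite F" "F \<subseteq> Ok ` K" "K \<subseteq> \<Union>F"
    using K(1) KO Oo unfolding compactin_def by (metis (no_types, lifting) imageE)
  obtain K0 where K0: "K0 \<subseteq> K" "finite K0" "F = Ok ` K0" using finite_subset_image[OF F(1,2)] by blast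
  have K0ne: "K0 \<noteq> {}" using K0 F(3) K(3) by auto
  define U where "U = \<Inter>(M ` K0)"
  have Uo: "openin \<sigma> U" unfolding U_def
    by (rule openin_Inter) (use K0 K0ne M in auto)
  have Uc: "convex U" unfolding U_def by (rule convex_Inter) (use K0 M in auto)
  have U0: "0 \<in> U" unfolding U_def using K0 M by auto
  define A where "A = (\<Union>k\<in>K. (\<lambda>v. k + 1 *\<^sub>R v) ` U)"
  have Aiff: "z \<in> A \<longleftrightarrow> (\<exists>k\<in>K. \<exists>u\<in>U. z = k + u)" for z unfolding A_def by auto
  have "\<forall>k\<in>K. openin \<sigma> ((\<lambda>v. k + 1 *\<^sub>R v) ` U)"
    by (intro ballI ltvs_open_image[OF s Uo]) simp
  hence Ao: "openin \<sigma> A" unfolding A_def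
    by (intro openin_Union) blast
  have Ac: "convex A"
  proof (rule convexI)
    fix x y :: 'a and u v :: real assume xy: "x \<in> A" "y \<in> A" and uv': "0 \<le> u" "0 \<le> v" "u + v = 1"
    have uv: "0 \<le> u \<and> 0 \<le> v \<and> u + v = 1" using uv' by blast
    obtain k1 u1 where 1: "k1 \<in> K" "u1 \<in> U" "x = k1 + u1" using xy(1) Aiff by blast
    obtain k2 u2 where 2: "k2 \<in> K" "u2 \<in> U" "y = k2 + u2" using xy(2) Aiff by blast
    have "u *\<^sub>R k1 + v *\<^sub>R k2 \<in> K" using K(2) 1 2 uv unfolding convex_def by blast
    moreover have "u *\<^sub>R u1 + v *\<^sub>R u2 \<in> U" using Uc 1 2 uv unfolding convex_def by blast
    moreover have "u *\<^sub>R x + v *\<^sub>R y = (u *\<^sub>R k1 + v *\<^sub>R k2) + (u *\<^sub>R u1 + v *\<^sub>R u2)"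
      unfolding 1 2 by (simp add: algebra_simps)
    ultimately show "u *\<^sub>R x + v *\<^sub>R y \<in> A" using Aiff by blast
  qed
  have Ane: "A \<noteq> {}" using K(3) U0 Aiff by force
  have AE: "A \<inter> E = {}"
  proof (rule ccontr)
    assume "A \<inter> E \<noteq> {}"
    then obtain z where z: "z \<in> A" "z \<in> E" by blast
    then obtain k u where ku0: "k \<in> K" "u \<in> U" "z = k + u" using Aiff[of z] by blast
    have ku: "k \<in> K" "u \<in> U" "k + u \<in> E" using ku0 z by auto
    have "k \<in> \<Union>F" using F(3) ku(1) by blast
    then obtain ki where ki: "ki \<in> K0" "k \<in> Ok ki" unfolding K0(3) by blast
    have kiK: "ki \<in> K" using ki K0 by blast
    have "-ki + k \<in> M ki" using ki(2) unfolding Ok_def by simp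
    moreover have "u \<in> M ki" using ku(2) ki(1) unfolding U_def by blast
    ultimately have "ki + ((-ki + k) + u) \<in> V ki" using M[OF kiK] by blast
    hence "k + u \<in> V ki" by (simp add: algebra_simps)
    thus False using V[OF kiK] ku(3) by blast
  qed
  obtain L where L: "linear L" "continuous_map \<sigma> euclideanreal L" "\<forall>a\<in>A. \<forall>e\<in>E. L e < L a"
    using sep_open[OF s Ao Ac Ane E AE] by blast
  obtain e0 where e0: "e0 \<in> E" using Ene by blast
  obtain a1 where a1: "a1 \<in> A" using Ane by blast
  have "L e0 < L a1" using L(3) e0 a1 by blast
  hence "L (a1 - e0) \<noteq> 0" using L(1) by (simp add: linear_diff)
  then obtain w where w: "L w \<noteq> 0" by blast
  obtain \<delta> where d: "\<delta> > 0" "\<forall>t. \<bar>t\<bar> < \<delta> \<longrightarrow> t *\<^sub>R w \<in> U" using ltvs_absorb[OF s Uo U0] by blast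
  have "\<exists>u1\<in>U. L u1 < 0"
  proof (cases "L w > 0")
    case True
    have "\<bar>-(\<delta>/2)\<bar> < \<delta>" using d(1) by simp
    hence "(-(\<delta>/2)) *\<^sub>R w \<in> U" using d(2) by blast
    moreover have "L ((-(\<delta>/2)) *\<^sub>R w) < 0" using True d(1) L(1) by (simp add: linear_neg linear_scale)
    ultimately show ?thesis by blast
  next
    case False
    hence "L w < 0" using w by simp
    moreover have "\<bar>\<delta>/2\<bar> < \<delta>" using d(1) by simp
    hence "(\<delta>/2) *\<^sub>R w \<in> U" using d(2) by blast
    moreover have "L ((\<delta>/2) *\<^sub>R w) = (\<delta>/2) * L w" using L(1) by (simp add: linear_scale)
    ultimately show ?thesis using d(1) by (metis half_gt_zero mult_pos_neg)
  qed
  then obtain u1 where u1: "u1 \<in> U" "L u1 < 0" by blast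
  have "compactin euclideanreal (L ` K)" using image_compactin[OF K(1) L(2)] .
  hence "compact (L ` K)" using compactin_euclidean_iff by blast
  then obtain m where m: "m \<in> L ` K" "\<forall>t\<in>L ` K. m \<le> t" using compact_attains_inf K(3) by blast
  then obtain k0 where k0: "k0 \<in> K" "m = L k0" by blast
  define c where "c = L k0 + L u1"
  have "\<forall>k\<in>K. c < L k" using m k0 u1 unfolding c_def by force
  moreover have "\<forall>e\<in>E. L e < c"
  proof
    fix e assume "e \<in> E"
    moreover have "k0 + u1 \<in> A" using Aiff k0 u1 by blast
    ultimately have "L e < L (k0 + u1)" using L(3) by blast
    thus "L e < c" unfolding c_def using L(1) by (simp add: linear_add)
  qed
  ultimately show ?thesis using L(1,2) by blast
qed



instantiation "fun" :: (type, real_vector) real_vector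
begin
definition scaleR_fun :: "real \<Rightarrow> ('a \<Rightarrow> 'b) \<Rightarrow> 'a \<Rightarrow> 'b" where
  "scaleR_fun c f = (\<lambda>x. c *\<^sub>R f x)"
instance by standard (simp_all add: scaleR_fun_def fun_eq_iff scaleR_add_right scaleR_add_left)
end

lemma scaleR_fun_apply [simp]: "(c *\<^sub>R f) x = c *\<^sub>R f x"
  by (simp add: scaleR_fun_def)

lemma lcs_ltvs: "lcs \<tau> \<Longrightarrow> ltvs \<tau>"
  unfolding lcs_def ltvs_def by blast

lemma ltvs_prod:
  fixes \<tau> :: "'a::real_vector topology"
  assumes s: "ltvs \<tau>"
  shows "ltvs (prod_topology \<tau> euclideanreal)"
  unfolding ltvs_def
proof (intro conjI allI impI)
  show "topspace (prod_topology \<tau> euclideanreal) = UNIV" using ltvs_top[OF s] by simp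
  let ?P = "prod_topology \<tau> euclideanreal"
  have f1: "continuous_map (prod_topology ?P ?P) \<tau> (\<lambda>z. fst (fst z))"
    using continuous_map_compose[OF continuous_map_fst continuous_map_fst] by (simp add: o_def)
  have f2: "continuous_map (prod_topology ?P ?P) \<tau> (\<lambda>z. fst (snd z))"
    using continuous_map_compose[OF continuous_map_snd continuous_map_fst] by (simp add: o_def)
  have g1: "continuous_map (prod_topology ?P ?P) euclideanreal (\<lambda>z. snd (fst z))"
    using continuous_map_compose[OF continuous_map_fst continuous_map_snd] by (simp add: o_def)
  have g2: "continuous_map (prod_topology ?P ?P) euclideanreal (\<lambda>z. snd (snd z))"
    using continuous_map_compose[OF continuous_map_snd continuous_map_snd] by (simp add: o_def)
  have "continuous_map (prod_topology ?P ?P) ?P (\<lambda>z. (fst (fst z) + fst (snd z), snd (fst z) + snd (snd z)))"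
    unfolding continuous_map_pairwise o_def
    using ltvs_comb[OF s f1 f2] continuous_map_add[OF g1 g2] by simp
  moreover have "(\<lambda>(x, y). x + y) = (\<lambda>z::('a \<times> real) \<times> ('a \<times> real). (fst (fst z) + fst (snd z), snd (fst z) + snd (snd z)))"
    by (auto simp: fun_eq_iff)
  ultimately show "continuous_map (prod_topology ?P ?P) ?P (\<lambda>(x, y). x + y)" by simp
  have h0: "continuous_map (prod_topology euclideanreal ?P) euclideanreal (\<lambda>z. fst z)"
    by (rule continuous_map_fst)
  have h1: "continuous_map (prod_topology euclideanreal ?P) \<tau> (\<lambda>z. fst (snd z))"
    using continuous_map_compose[OF continuous_map_snd continuous_map_fst] by (simp add: o_def)
  have h2: "continuous_map (prod_topology euclideanreal ?P) euclideanreal (\<lambda>z. snd (snd z))"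
    using continuous_map_compose[OF continuous_map_snd continuous_map_snd] by (simp add: o_def)
  have "continuous_map (prod_topology euclideanreal ?P) ?P (\<lambda>z. (fst z *\<^sub>R fst (snd z), fst z * snd (snd z)))"
    unfolding continuous_map_pairwise o_def
    using ltvs_smul[OF s h0 h1] continuous_map_real_mult[OF h0 h2] by simp
  moreover have "(\<lambda>(a, x). a *\<^sub>R x) = (\<lambda>z::real \<times> ('a \<times> real). (fst z *\<^sub>R fst (snd z), fst z * snd (snd z)))"
    by (auto simp: fun_eq_iff)
  ultimately show "continuous_map (prod_topology euclideanreal ?P) ?P (\<lambda>(a, x). a *\<^sub>R x)" by simp
  fix U assume U: "openin ?P U \<and> 0 \<in> U"
  have U00: "(0, 0) \<in> U" using U by (simp add: zero_prod_def)
  obtain W1 W2 where W: "openin \<tau> W1" "openin euclideanreal W2" "0 \<in> W1" "0 \<in> W2" "W1 \<times> W2 \<subseteq> U"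
    using conjunct1[OF U, unfolded openin_prod_topology_alt, rule_format, OF U00] by blast
  obtain V1 where V1: "openin \<tau> V1" "convex V1" "0 \<in> V1" "V1 \<subseteq> W1" using ltvs_base[OF s W(1,3)] by blast
  have "open W2" using W(2) open_openin by metis
  then obtain d where d: "d > 0" "ball 0 d \<subseteq> W2" using W(4) open_contains_ball by blast
  have "openin euclideanreal (ball (0::real) d)" using open_ball open_openin by metis
  hence "openin ?P (V1 \<times> ball (0::real) d)" using V1(1) by (simp add: openin_prod_Times_iff)
  moreover have "convex (V1 \<times> ball (0::real) d)" using convex_Times[OF V1(2) convex_ball[of "0::real" d]] .
  moreover have "0 \<in> V1 \<times> ball (0::real) d" using V1(3) d(1) by (simp add: zero_prod_def)
  moreover have "V1 \<times> ball (0::real) d \<subseteq> U"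
  proof -
    have "V1 \<times> ball (0::real) d \<subseteq> W1 \<times> W2" using V1(4) d(2) by (rule Sigma_mono)
    thus ?thesis using W(5) by (rule subset_trans)
  qed
  ultimately show "\<exists>V. openin ?P V \<and> convex V \<and> 0 \<in> V \<and> V \<subseteq> U" by (intro exI conjI)
qed


abbreviation PT :: "('a \<Rightarrow> real) topology" where
  "PT \<equiv> product_topology (\<lambda>_. euclideanreal) UNIV"

lemma PT_top [simp]: "topspace PT = UNIV"
  by (simp add: topspace_product_topology PiE_UNIV_domain)

lemma fun_sum_apply: "(\<Sum>i\<in>I. f i) x = (\<Sum>i\<in>I. f i x)"
  by (induction I rule: infinite_finite_induct) (auto simp: plus_fun_def zero_fun_def)

lemma PT_proj: "continuous_map PT euclideanreal (\<lambda>\<psi>. \<psi> i)"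
  by (rule continuous_map_product_projection) simp

lemma box_open:
  assumes "finite I"
  shows "openin PT {\<psi>::'a \<Rightarrow> real. \<forall>i\<in>I. \<bar>\<psi> i - x0 i\<bar> < \<delta>}"
  using assms
proof (induction I rule: finite_induct)
  case empty
  show ?case using openin_topspace[of PT] by simp
next
  case (insert i I)
  have "openin PT {\<psi> \<in> topspace PT. \<psi> i \<in> ball (x0 i) \<delta>}"
    by (rule openin_continuous_map_preimage[OF PT_proj]) (metis open_ball open_openin)
  moreover have "{\<psi> \<in> topspace PT. \<psi> i \<in> ball (x0 i) \<delta>} = {\<psi>. \<bar>\<psi> i - x0 i\<bar> < \<delta>}"
    by (auto simp: dist_real_def abs_less_iff)
  ultimately have "openin PT {\<psi>::'a \<Rightarrow> real. \<bar>\<psi> i - x0 i\<bar> < \<delta>}" by simp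
  hence "openin PT ({\<psi>::'a \<Rightarrow> real. \<bar>\<psi> i - x0 i\<bar> < \<delta>} \<inter> {\<psi>. \<forall>i\<in>I. \<bar>\<psi> i - x0 i\<bar> < \<delta>})"
    using insert.IH by (rule openin_Int)
  moreover have "{\<psi>::'a \<Rightarrow> real. \<bar>\<psi> i - x0 i\<bar> < \<delta>} \<inter> {\<psi>. \<forall>i\<in>I. \<bar>\<psi> i - x0 i\<bar> < \<delta>}
      = {\<psi>. \<forall>i\<in>insert i I. \<bar>\<psi> i - x0 i\<bar> < \<delta>}" by auto
  ultimately show ?case by simp
qed

lemma prod_nbhd:
  assumes U: "openin PT U" and x0: "x0 \<in> U"
  shows "\<exists>I \<delta>. finite I \<and> \<delta> > 0 \<and> {\<psi>::'a \<Rightarrow> real. \<forall>i\<in>I. \<bar>\<psi> i - x0 i\<bar> < \<delta>} \<subseteq> U"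
proof -
  obtain Uf where Uf: "finite {i \<in> UNIV. Uf i \<noteq> topspace euclideanreal}"
    "\<forall>i\<in>UNIV. openin euclideanreal (Uf i)" "x0 \<in> Pi\<^sub>E UNIV Uf" "Pi\<^sub>E UNIV Uf \<subseteq> U"
    using bspec[OF U[unfolded openin_product_topology_alt] x0] by (elim exE conjE) (rule that)
  define I where "I = {i. Uf i \<noteq> UNIV}"
  have fI: "finite I" using Uf(1) unfolding I_def by simp
  have "\<forall>i\<in>I. \<exists>d>0. ball (x0 i) d \<subseteq> Uf i"
  proof
    fix i assume "i \<in> I"
    have "open (Uf i)" using Uf(2) by simp
    moreover have "x0 i \<in> Uf i" using Uf(3) by auto
    ultimately show "\<exists>d>0. ball (x0 i) d \<subseteq> Uf i" using open_contains_ball by blast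
  qed
  then obtain dd where dd: "\<forall>i\<in>I. dd i > 0 \<and> ball (x0 i) (dd i) \<subseteq> Uf i"
    using bchoice[of I "\<lambda>i d. d > 0 \<and> ball (x0 i) d \<subseteq> Uf i"] by blast
  define \<delta> where "\<delta> = Min (insert 1 (dd ` I))"
  have dpos: "\<delta> > 0" unfolding \<delta>_def using fI dd by (subst Min_gr_iff) auto
  have dle: "\<delta> \<le> dd i" if "i \<in> I" for i unfolding \<delta>_def using fI that by (intro Min_le) auto
  have "{\<psi>::'a \<Rightarrow> real. \<forall>i\<in>I. \<bar>\<psi> i - x0 i\<bar> < \<delta>} \<subseteq> Pi\<^sub>E UNIV Uf"
  proof
    fix \<psi> :: "'a \<Rightarrow> real" assume \<psi>: "\<psi> \<in> {\<psi>. \<forall>i\<in>I. \<bar>\<psi> i - x0 i\<bar> < \<delta>}"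
    have "\<psi> i \<in> Uf i" for i
    proof (cases "i \<in> I")
      case True
      have "dist (x0 i) (\<psi> i) < dd i" using \<psi> True dle[OF True] by (force simp: dist_real_def abs_less_iff)
      hence "\<psi> i \<in> ball (x0 i) (dd i)" by simp
      thus ?thesis using dd True by blast
    next
      case False thus ?thesis unfolding I_def by simp
    qed
    thus "\<psi> \<in> Pi\<^sub>E UNIV Uf" by (simp add: PiE_UNIV_domain)
  qed
  hence "{\<psi>::'a \<Rightarrow> real. \<forall>i\<in>I. \<bar>\<psi> i - x0 i\<bar> < \<delta>} \<subseteq> U" using Uf(4) by (rule subset_trans)
  thus ?thesis using fI dpos by (intro exI[of _ I] exI[of _ \<delta>] conjI)
qed

lemma ltvs_PT: "ltvs (PT :: ('a \<Rightarrow> real) topology)"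
  unfolding ltvs_def
proof (intro conjI allI impI)
  show "topspace PT = (UNIV :: ('a \<Rightarrow> real) set)" by simp
  have A: "\<forall>k. continuous_map (prod_topology PT PT) euclideanreal (\<lambda>z. fst z k + snd z k)"
    by (intro allI continuous_map_add continuous_map_compose[OF continuous_map_fst PT_proj, unfolded o_def]
        continuous_map_compose[OF continuous_map_snd PT_proj, unfolded o_def])
  thus "continuous_map (prod_topology PT PT) PT (\<lambda>(x, y). x + y)"
    unfolding continuous_map_componentwise_UNIV using A by (auto simp: case_prod_beta plus_fun_def)
  have B: "\<forall>k. continuous_map (prod_topology euclideanreal PT) euclideanreal (\<lambda>z. fst z * snd z k)"
    by (intro allI continuous_map_real_mult continuous_map_fst
        continuous_map_compose[OF continuous_map_snd PT_proj, unfolded o_def])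
  thus "continuous_map (prod_topology euclideanreal PT) PT (\<lambda>(a, x). a *\<^sub>R x)"
    unfolding continuous_map_componentwise_UNIV using B by (auto simp: case_prod_beta)
  fix U :: "('a \<Rightarrow> real) set" assume U: "openin PT U \<and> 0 \<in> U"
  then obtain I \<delta> where I: "finite I" "\<delta> > 0" "{\<psi>::'a \<Rightarrow> real. \<forall>i\<in>I. \<bar>\<psi> i - 0 i\<bar> < \<delta>} \<subseteq> U"
    using prod_nbhd[of U 0] by blast
  define B where "B = {\<psi>::'a \<Rightarrow> real. \<forall>i\<in>I. \<bar>\<psi> i - 0 i\<bar> < \<delta>}"
  have "openin PT B" unfolding B_def by (rule box_open[OF I(1)])
  moreover have "convex B" unfolding B_def
  proof (rule convexI)
    fix a b :: "'a \<Rightarrow> real" and u v :: real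
    assume ab: "a \<in> {\<psi>. \<forall>i\<in>I. \<bar>\<psi> i - 0 i\<bar> < \<delta>}" "b \<in> {\<psi>. \<forall>i\<in>I. \<bar>\<psi> i - 0 i\<bar> < \<delta>}"
      and uv: "0 \<le> u" "0 \<le> v" "u + v = 1"
    have "\<bar>u * a i + v * b i\<bar> < \<delta>" if "i \<in> I" for i
    proof -
      have "\<bar>u * a i + v * b i\<bar> \<le> u * \<bar>a i\<bar> + v * \<bar>b i\<bar>"
        using uv by (metis abs_mult abs_of_nonneg abs_triangle_ineq)
      also have "\<dots> < u * \<delta> + v * \<delta> \<or> u * \<bar>a i\<bar> + v * \<bar>b i\<bar> \<le> u * \<delta> + v * \<delta>"
        using ab that uv by (auto intro!: add_mono mult_left_mono simp: less_imp_le zero_fun_def)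
      hence "u * \<bar>a i\<bar> + v * \<bar>b i\<bar> \<le> \<delta>" using uv by (auto simp: distrib_right[symmetric])
      show ?thesis
      proof (cases "u = 0")
        case True thus ?thesis using uv ab that by (simp add: zero_fun_def)
      next
        case False
        hence "u * \<bar>a i\<bar> < u * \<delta>" using uv ab that by (simp add: zero_fun_def)
        moreover have "v * \<bar>b i\<bar> \<le> v * \<delta>" using uv ab that by (intro mult_left_mono) (auto simp: zero_fun_def less_imp_le)
        ultimately have "u * \<bar>a i\<bar> + v * \<bar>b i\<bar> < (u + v) * \<delta>" by (simp add: distrib_right)
        thus ?thesis using uv \<open>\<bar>u * a i + v * b i\<bar> \<le> u * \<bar>a i\<bar> + v * \<bar>b i\<bar>\<close> by simp
      qed
    qed
    thus "u *\<^sub>R a + v *\<^sub>R b \<in> {\<psi>. \<forall>i\<in>I. \<bar>\<psi> i - 0 i\<bar> < \<delta>}" by (simp add: zero_fun_def plus_fun_def)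
  qed
  moreover have "0 \<in> B" unfolding B_def using I(2) by simp
  ultimately show "\<exists>V. openin PT V \<and> convex V \<and> 0 \<in> V \<and> V \<subseteq> U" using I(3) unfolding B_def by blast
qed


lemma repr:
  fixes L :: "('a \<Rightarrow> real) \<Rightarrow> real"
  assumes L: "linear L" "continuous_map PT euclideanreal L"
  shows "\<exists>I c. finite I \<and> (\<forall>\<psi>. L \<psi> = (\<Sum>i\<in>I. c i * \<psi> i))"
proof -
  have "openin PT {\<psi> \<in> topspace PT. L \<psi> \<in> ball 0 1}"
    by (rule openin_continuous_map_preimage[OF L(2)]) simp
  moreover have "{\<psi> \<in> topspace PT. L \<psi> \<in> ball 0 1} = {\<psi>. \<bar>L \<psi>\<bar> < 1}" by (auto simp: dist_real_def)
  ultimately have o: "openin PT {\<psi>. \<bar>L \<psi>\<bar> < 1}" by simp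
  have "(0::'a\<Rightarrow>real) \<in> {\<psi>. \<bar>L \<psi>\<bar> < 1}" using linear_0[OF L(1)] by simp
  then obtain I \<delta> where I: "finite I" "\<delta> > 0" "{\<psi>::'a \<Rightarrow> real. \<forall>i\<in>I. \<bar>\<psi> i - 0 i\<bar> < \<delta>} \<subseteq> {\<psi>. \<bar>L \<psi>\<bar> < 1}"
    using prod_nbhd[OF o] by blast
  have zero: "L \<psi> = 0" if "\<forall>i\<in>I. \<psi> i = 0" for \<psi>
  proof (rule ccontr)
    assume nz: "L \<psi> \<noteq> 0"
    define t where "t = 1 / \<bar>L \<psi>\<bar>"
    have "\<forall>i\<in>I. \<bar>(t *\<^sub>R \<psi>) i - 0 i\<bar> < \<delta>" using that I(2) by (simp add: zero_fun_def)
    hence "\<bar>L (t *\<^sub>R \<psi>)\<bar> < 1" using I(3) by blast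
    moreover have "\<bar>L (t *\<^sub>R \<psi>)\<bar> = 1" using nz unfolding t_def linear_scale[OF L(1)] by (simp add: abs_mult)
    ultimately show False by simp
  qed
  define ind where "ind i = (\<lambda>x. if x = i then 1 else 0 :: real)" for i :: 'a
  define c where "c i = L (ind i)" for i
  have "L \<psi> = (\<Sum>i\<in>I. c i * \<psi> i)" for \<psi>
  proof -
    define \<psi>' where "\<psi>' = (\<Sum>i\<in>I. \<psi> i *\<^sub>R ind i)"
    have ev: "\<psi>' j = (if j \<in> I then \<psi> j else 0)" for j
      unfolding \<psi>'_def fun_sum_apply by (simp add: ind_def I(1) if_distrib cong: if_cong)
    have "\<forall>i\<in>I. (\<psi> - \<psi>') i = 0" using ev by (simp add: fun_diff_def)
    hence "L (\<psi> - \<psi>') = 0" by (rule zero)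
    hence "L \<psi> = L \<psi>'" using linear_diff[OF L(1)] by simp
    also have "\<dots> = (\<Sum>i\<in>I. \<psi> i * c i)" unfolding \<psi>'_def c_def
      by (simp add: linear_sum[OF L(1)] linear_scale[OF L(1)])
    finally show ?thesis by (simp add: mult.commute)
  qed
  thus ?thesis using I(1) by blast
qed

lemma convex_fun_convex: "convex_fun C \<Longrightarrow> convex C"
  unfolding convex_fun_def
proof (rule convexI)
  fix a b :: "'a \<Rightarrow> real" and u v :: real
  assume C: "\<forall>\<phi>\<in>C. \<forall>\<psi>\<in>C. \<forall>u. 0 \<le> u \<and> u \<le> 1 \<longrightarrow> (\<lambda>y. u * \<phi> y + (1 - u) * \<psi> y) \<in> C"
    and ab: "a \<in> C" "b \<in> C" and uv: "0 \<le> u" "0 \<le> v" "u + v = 1"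
  have "(\<lambda>y. u * a y + (1 - u) * b y) \<in> C" using C ab uv by auto
  moreover have "u *\<^sub>R a + v *\<^sub>R b = (\<lambda>y. u * a y + (1 - u) * b y)"
    using uv by (auto simp: fun_eq_iff plus_fun_def)
  ultimately show "u *\<^sub>R a + v *\<^sub>R b \<in> C" by simp
qed

lemma wstar_sep:
  fixes \<tau> :: "'a::real_vector topology"
  assumes C: "closedin (wstar \<tau>) C" "convex_fun C" and \<phi>: "\<phi> \<in> dual \<tau>" "\<phi> \<notin> C"
  shows "\<exists>u c. (\<forall>\<psi>\<in>C. \<psi> u < c) \<and> c < \<phi> u"
proof -
  obtain Q where Q: "closedin PT Q" "C = Q \<inter> dual \<tau>"
    using C(1) unfolding wstar_def closedin_subtopology by blast
  have Cd: "C \<subseteq> dual \<tau>" using Q(2) by blast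
  have \<phi>Q: "\<phi> \<notin> Q" using \<phi> Q(2) by blast
  have Vo: "openin PT (UNIV - Q)" using Q(1) unfolding closedin_def by simp
  have "\<forall>k\<in>{\<phi>}. \<exists>V. openin PT V \<and> k \<in> V \<and> V \<inter> C = {}"
    using Vo \<phi>Q Q(2) by blast
  then obtain L c where L: "linear L" "continuous_map PT euclideanreal L" "\<forall>k\<in>{\<phi>}. c < L k" "\<forall>e\<in>C. L e < c"
    using sep_compact[OF ltvs_PT, of "{\<phi>}" C] convex_fun_convex[OF C(2)] by auto
  obtain I cc where I: "finite I" "\<forall>\<psi>. L \<psi> = (\<Sum>i\<in>I. cc i * \<psi> i)" using repr[OF L(1,2)] by blast
  define u where "u = (\<Sum>i\<in>I. cc i *\<^sub>R i)"
  have Lu: "L \<psi> = \<psi> u" if "\<psi> \<in> dual \<tau>" for \<psi>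
  proof -
    have lin: "linear \<psi>" using that unfolding dual_def by blast
    have "L \<psi> = (\<Sum>i\<in>I. cc i * \<psi> i)" using I(2) by blast
    also have "\<dots> = \<psi> u" unfolding u_def by (simp add: linear_sum[OF lin] linear_scale[OF lin])
    finally show ?thesis .
  qed
  have "\<forall>\<psi>\<in>C. \<psi> u < c"
  proof
    fix \<psi> assume "\<psi> \<in> C"
    hence "L \<psi> < c" "\<psi> \<in> dual \<tau>" using L(4) Cd by auto
    thus "\<psi> u < c" using Lu by simp
  qed
  moreover have "c < \<phi> u" using L(3) Lu[OF \<phi>(1)] by simp
  ultimately show ?thesis by blast
qed


lemma ereal_pos_mult_not_minf: "0 \<le> c \<Longrightarrow> a \<noteq> -\<infinity> \<Longrightarrow> ereal c * a \<noteq> -\<infinity>"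
  by (cases a) (auto simp: ereal_mult_infty)

lemma Gamma0_scale:
  assumes F: "F \<in> Gamma0 \<tau>" and e: "e > 0"
  shows "(\<lambda>z. ereal e * F z) \<in> Gamma0 \<tau>"
proof -
  have nm: "\<forall>x. F x \<noteq> -\<infinity>" and ex: "\<exists>x. F x \<noteq> \<infinity>"
    and cv: "\<forall>x y. \<forall>u::real. 0 \<le> u \<and> u \<le> 1 \<longrightarrow>
          F (u *\<^sub>R x + (1 - u) *\<^sub>R y) \<le> ereal u * F x + ereal (1 - u) * F y"
    and cl: "\<forall>c::real. closedin \<tau> {x. F x \<le> ereal c}"
    using F unfolding Gamma0_def by auto
  have 1: "\<forall>x. ereal e * F x \<noteq> -\<infinity>" using nm e ereal_pos_mult_not_minf by auto
  have 2: "\<exists>x. ereal e * F x \<noteq> \<infinity>"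
  proof -
    obtain x where "F x \<noteq> \<infinity>" using ex by blast
    hence "ereal e * F x \<noteq> \<infinity>" using nm by (cases "F x") auto
    thus ?thesis by blast
  qed
  have 3: "ereal e * F (u *\<^sub>R x + (1 - u) *\<^sub>R y) \<le> ereal u * (ereal e * F x) + ereal (1 - u) * (ereal e * F y)"
    if u: "0 \<le> u" "u \<le> 1" for x y u
  proof -
    define A where "A = ereal u * F x"
    define B where "B = ereal (1 - u) * F y"
    have A: "A \<noteq> -\<infinity>" unfolding A_def using u nm ereal_pos_mult_not_minf by auto
    have B: "B \<noteq> -\<infinity>" unfolding B_def using u nm ereal_pos_mult_not_minf by auto
    have "ereal e * F (u *\<^sub>R x + (1 - u) *\<^sub>R y) \<le> ereal e * (A + B)"
      unfolding A_def B_def using cv u e by (intro ereal_mult_left_mono) auto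
    also have "ereal e * (A + B) = A * ereal e + B * ereal e"
      using A B by (subst mult.commute) (rule ereal_distrib; auto)
    also have "\<dots> = ereal u * (ereal e * F x) + ereal (1 - u) * (ereal e * F y)"
      unfolding A_def B_def by (simp add: mult_ac)
    finally show ?thesis .
  qed
  have 4: "closedin \<tau> {x. ereal e * F x \<le> ereal c}" for c
  proof -
    have "{x. ereal e * F x \<le> ereal c} = {x. F x \<le> ereal (c / e)}"
    proof (intro set_eqI iffI; simp)
      fix x
      show "ereal e * F x \<le> ereal c \<Longrightarrow> F x \<le> ereal (c / e)"
        using e nm by (cases "F x") (auto simp: pos_le_divide_eq mult.commute)
      show "F x \<le> ereal (c / e) \<Longrightarrow> ereal e * F x \<le> ereal c"
        using e nm by (cases "F x") (auto simp: pos_le_divide_eq mult.commute)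
    qed
    thus ?thesis using cl by simp
  qed
  show ?thesis unfolding Gamma0_def using 1 2 3 4 by blast
qed

lemma epi_sep_open:
  fixes \<tau> :: "'a::real_vector topology"
  assumes top: "topspace \<tau> = UNIV" and cl: "\<forall>c::real. closedin \<tau> {x. g x \<le> ereal c}"
    and lt: "ereal r0 < g v0"
  shows "\<exists>V. openin (prod_topology \<tau> euclideanreal) V \<and> (v0, r0) \<in> V \<and> V \<inter> {p. g (fst p) \<le> ereal (snd p)} = {}"
proof -
  obtain c where c: "ereal r0 < ereal c" "ereal c < g v0" using ereal_dense2[OF lt] by blast
  define V where "V = {v. \<not> g v \<le> ereal c} \<times> {r. r < c}"
  have "openin \<tau> (topspace \<tau> - {v. g v \<le> ereal c})" using cl unfolding closedin_def by blast
  moreover have "topspace \<tau> - {v. g v \<le> ereal c} = {v. \<not> g v \<le> ereal c}" using top by auto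
  ultimately have o1: "openin \<tau> {v. \<not> g v \<le> ereal c}" by simp
  have o2: "openin euclideanreal {r::real. r < c}" using open_lessThan[of c] by (simp add: lessThan_def)
  have "openin (prod_topology \<tau> euclideanreal) V" unfolding V_def using o1 o2 by (simp add: openin_prod_Times_iff)
  moreover have "(v0, r0) \<in> V" unfolding V_def using c by auto
  moreover have "V \<inter> {p. g (fst p) \<le> ereal (snd p)} = {}"
  proof (rule ccontr)
    assume "V \<inter> {p. g (fst p) \<le> ereal (snd p)} \<noteq> {}"
    then obtain v r where "\<not> g v \<le> ereal c" "r < c" "g v \<le> ereal r" unfolding V_def by auto
    thus False by (meson ereal_less_eq(3) less_imp_le order_trans)
  qed
  ultimately show ?thesis by blast
qed


lemma eps_sub_exists:
  fixes \<tau> :: "'a::real_vector topology"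
  assumes lcs: "lcs \<tau>" and g: "g \<in> Gamma0 \<tau>" and gx: "g x = ereal gx" and \<epsilon>: "\<epsilon> > 0"
    and hyp: "\<forall>s. 0 < s \<and> s \<le> 1 \<longrightarrow> ereal (gx - \<epsilon>/2 + s * N) < g (x + s *\<^sub>R u)"
  shows "\<exists>\<phi> \<in> eps_subdiff \<tau> \<epsilon> g x. N - \<epsilon>/2 < \<phi> u"
proof -
  let ?\<sigma> = "prod_topology \<tau> euclideanreal"
  have st: "ltvs \<tau>" using lcs_ltvs[OF lcs] .
  have s: "ltvs ?\<sigma>" using ltvs_prod[OF st] .
  have nm: "\<forall>x. g x \<noteq> -\<infinity>"
    and cv: "\<forall>x y. \<forall>u::real. 0 \<le> u \<and> u \<le> 1 \<longrightarrow>
          g (u *\<^sub>R x + (1 - u) *\<^sub>R y) \<le> ereal u * g x + ereal (1 - u) * g y"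
    and cl: "\<forall>c::real. closedin \<tau> {x. g x \<le> ereal c}"
    using g unfolding Gamma0_def by auto
  define E where "E = {p :: 'a \<times> real. g (fst p) \<le> ereal (snd p)}"
  have Ec: "convex E"
  proof (rule convexI)
    fix p q :: "'a \<times> real" and a b :: real
    assume pq: "p \<in> E" "q \<in> E" and ab: "0 \<le> a" "0 \<le> b" "a + b = 1"
    have b: "b = 1 - a" using ab by simp
    have "g (fst (a *\<^sub>R p + b *\<^sub>R q)) = g (a *\<^sub>R fst p + (1 - a) *\<^sub>R fst q)" using b by simp
    also have "\<dots> \<le> ereal a * g (fst p) + ereal (1 - a) * g (fst q)" using cv ab b by auto
    also have "\<dots> \<le> ereal a * ereal (snd p) + ereal (1 - a) * ereal (snd q)"
      using pq ab b unfolding E_def by (intro add_mono ereal_mult_left_mono) auto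
    also have "\<dots> = ereal (snd (a *\<^sub>R p + b *\<^sub>R q))" using b by simp
    finally show "a *\<^sub>R p + b *\<^sub>R q \<in> E" unfolding E_def by simp
  qed
  define a0 where "a0 = (x, gx - \<epsilon>/2)"
  define b0 where "b0 = (u, N)"
  define K where "K = (\<lambda>s. a0 + s *\<^sub>R b0) ` {0..1}"
  have Kc: "compactin ?\<sigma> K" unfolding K_def
    by (rule image_compactin[OF _ ltvs_line[OF s]]) (simp add: compactin_euclidean_iff)
  have Kv: "convex K" unfolding K_def
  proof (rule convexI)
    fix p q :: "'a \<times> real" and a b :: real
    assume pq: "p \<in> (\<lambda>s. a0 + s *\<^sub>R b0) ` {0..1}" "q \<in> (\<lambda>s. a0 + s *\<^sub>R b0) ` {0..1}"
      and ab: "0 \<le> a" "0 \<le> b" "a + b = 1"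
    obtain s1 s2 where s12: "s1 \<in> {0..1}" "s2 \<in> {0..1}" "p = a0 + s1 *\<^sub>R b0" "q = a0 + s2 *\<^sub>R b0"
      using pq by blast
    have "a *\<^sub>R p + b *\<^sub>R q = a0 + (a * s1 + b * s2) *\<^sub>R b0"
    proof -
      have "a *\<^sub>R p + b *\<^sub>R q = (a + b) *\<^sub>R a0 + (a * s1 + b * s2) *\<^sub>R b0"
        unfolding s12 by (simp add: algebra_simps)
      thus ?thesis using ab by simp
    qed
    moreover have "a * s1 + b * s2 \<in> {0..1}"
    proof -
      have "a * s1 \<le> a" "b * s2 \<le> b" using s12 ab by (auto intro: mult_left_le)
      thus ?thesis using s12 ab by auto
    qed
    ultimately show "a *\<^sub>R p + b *\<^sub>R q \<in> (\<lambda>s. a0 + s *\<^sub>R b0) ` {0..1}" by blast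
  qed
  have Kne: "K \<noteq> {}" unfolding K_def by auto
  have KE: "\<forall>k\<in>K. \<exists>V. openin ?\<sigma> V \<and> k \<in> V \<and> V \<inter> E = {}"
  proof
    fix k assume "k \<in> K"
    then obtain t where t: "t \<in> {0..1}" "k = a0 + t *\<^sub>R b0" unfolding K_def by blast
    have k: "k = (x + t *\<^sub>R u, gx - \<epsilon>/2 + t * N)" unfolding t a0_def b0_def by simp
    have "ereal (gx - \<epsilon>/2 + t * N) < g (x + t *\<^sub>R u)"
    proof (cases "t = 0")
      case True thus ?thesis using gx \<epsilon> by simp
    next
      case False thus ?thesis using hyp t by auto
    qed
    hence "\<exists>V. openin ?\<sigma> V \<and> (x + t *\<^sub>R u, gx - \<epsilon>/2 + t * N) \<in> V \<and> V \<inter> E = {}"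
      unfolding E_def by (rule epi_sep_open[OF ltvs_top[OF st] cl])
    thus "\<exists>V. openin ?\<sigma> V \<and> k \<in> V \<and> V \<inter> E = {}" unfolding k .
  qed
  obtain L c0 where L: "linear L" "continuous_map ?\<sigma> euclideanreal L" "\<forall>k\<in>K. c0 < L k" "\<forall>e\<in>E. L e < c0"
    using sep_compact[OF s Kc Kv Kne Ec KE] by blast
  define w where "w v = L (v, 0)" for v
  define \<beta> where "\<beta> = L (0, 1)"
  have Ldec: "L (v, r) = w v + r * \<beta>" for v r
  proof -
    have e: "(v, r) = (v, 0) + r *\<^sub>R (0, 1)" by simp
    have "L ((v, 0) + r *\<^sub>R (0, 1)) = L (v, 0) + r * L (0, 1)"
      by (simp only: linear_add[OF L(1)] linear_scale[OF L(1)] real_scaleR_def)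
    hence "L (v, r) = L (v, 0) + r * L (0, 1)" unfolding e[symmetric] .
    thus ?thesis unfolding w_def \<beta>_def .
  qed
  have wlin: "linear w"
  proof (rule linearI)
    fix a b :: 'a and c :: real
    show "w (a + b) = w a + w b" using Ldec[of "a+b" 0] Ldec[of a 0] Ldec[of b 0] linear_add[OF L(1), of "(a,0)" "(b,0)"]
      unfolding w_def by simp
    show "w (c *\<^sub>R a) = c *\<^sub>R w a" using linear_scale[OF L(1), of c "(a,0)"] unfolding w_def by simp
  qed
  have wc: "continuous_map \<tau> euclideanreal w"
  proof -
    have "continuous_map \<tau> ?\<sigma> (\<lambda>v. (v, 0::real))"
      unfolding continuous_map_pairwise o_def by (simp add: continuous_map_id[unfolded id_def])
    from continuous_map_compose[OF this L(2)] show ?thesis unfolding w_def o_def .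
  qed
  have a0K: "a0 \<in> K" unfolding K_def by force
  have a1K: "a0 + b0 \<in> K" unfolding K_def by (rule image_eqI[of _ _ 1]) auto
  have 1: "c0 < w x + (gx - \<epsilon>/2) * \<beta>" using L(3) a0K Ldec unfolding a0_def by auto
  have 2: "w x + gx * \<beta> < c0" using L(4) Ldec gx unfolding E_def by force
  have 3: "c0 < w (x + u) + (gx - \<epsilon>/2 + N) * \<beta>" using L(3) a1K Ldec unfolding a0_def b0_def by auto
  have \<beta>neg: "\<beta> < 0"
  proof -
    have "(gx - \<epsilon>/2) * \<beta> > gx * \<beta>" using 1 2 by simp
    hence "- (\<epsilon>/2) * \<beta> > 0" by (simp add: algebra_simps)
    thus ?thesis using \<epsilon> by (simp add: mult_less_0_iff zero_less_mult_iff)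
  qed
  define bb where "bb = - \<beta>"
  have bb: "bb > 0" unfolding bb_def using \<beta>neg by simp
  define \<phi> where "\<phi> v = w v / bb" for v
  have \<phi>lin: "linear \<phi>" unfolding \<phi>_def
    by (rule linearI) (auto simp: linear_add[OF wlin] linear_scale[OF wlin] add_divide_distrib)
  have \<phi>c: "continuous_map \<tau> euclideanreal \<phi>" unfolding \<phi>_def
    using continuous_map_real_mult[OF wc continuous_map_const[THEN iffD2, of _ "1/bb"]]
    by (simp add: divide_inverse)
  have \<phi>d: "\<phi> \<in> dual \<tau>" unfolding dual_def using \<phi>lin \<phi>c by blast
  have sub: "g y \<ge> g x + ereal (\<phi> (y - x)) - ereal \<epsilon>" for y
  proof (cases "g y")
    case (real r)
    have "w y + r * \<beta> < c0" using L(4) Ldec real unfolding E_def by force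
    hence "w y - r * bb < w x - (gx - \<epsilon>/2) * bb" using 1 unfolding bb_def by simp
    hence "(w y - w x) < (r - gx + \<epsilon>/2) * bb" by (simp add: algebra_simps)
    hence "(w y - w x) / bb < r - gx + \<epsilon>/2" using bb by (simp add: pos_divide_less_eq)
    moreover have "\<phi> (y - x) = (w y - w x) / bb" unfolding \<phi>_def by (simp add: linear_diff[OF wlin])
    ultimately have "gx + \<phi> (y - x) - \<epsilon> \<le> r" using \<epsilon> by simp
    thus ?thesis using real gx by simp
  next
    case PInf thus ?thesis by simp
  next
    case MInf thus ?thesis using nm by simp
  qed
  have "\<phi> \<in> eps_subdiff \<tau> \<epsilon> g x" unfolding eps_subdiff_def using gx \<phi>d sub by simp
  moreover have "N - \<epsilon>/2 < \<phi> u"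
  proof -
    have "w (x + u) = w x + w u" using linear_add[OF wlin] .
    hence "(N - \<epsilon>/2) * bb < w u" using 2 3 unfolding bb_def by (simp add: algebra_simps)
    thus ?thesis unfolding \<phi>_def using bb by (simp add: pos_less_divide_eq)
  qed
  ultimately show ?thesis by blast
qed


lemma dual_comb:
  assumes "\<phi> \<in> dual \<tau>" "\<psi> \<in> dual \<tau>"
  shows "(\<lambda>v. a * \<phi> v + b * \<psi> v) \<in> dual \<tau>"
proof -
  have l: "linear \<phi>" "linear \<psi>" and c: "continuous_map \<tau> euclideanreal \<phi>" "continuous_map \<tau> euclideanreal \<psi>"
    using assms unfolding dual_def by auto
  have "linear (\<lambda>v. a * \<phi> v + b * \<psi> v)"
    by (rule linearI) (simp_all add: linear_add[OF l(1)] linear_add[OF l(2)] linear_scale[OF l(1)] linear_scale[OF l(2)] algebra_simps)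
  moreover have "continuous_map \<tau> euclideanreal (\<lambda>v. a * \<phi> v + b * \<psi> v)"
    by (intro continuous_map_add continuous_map_real_mult c continuous_map_const[THEN iffD2]) auto
  ultimately show ?thesis unfolding dual_def by blast
qed

lemma wstar_top: "topspace (wstar \<tau>) = dual \<tau>"
  unfolding wstar_def by simp

lemma convex_fun_dual: "convex_fun (dual \<tau>)"
  unfolding convex_fun_def using dual_comb by blast

lemma wclco_props:
  assumes S: "S \<subseteq> dual \<tau>"
  shows "wclco \<tau> S \<subseteq> dual \<tau>" "S \<subseteq> wclco \<tau> S" "closedin (wstar \<tau>) (wclco \<tau> S)" "convex_fun (wclco \<tau> S)"
    "\<And>H. S \<subseteq> H \<Longrightarrow> convex_fun H \<Longrightarrow> closedin (wstar \<tau>) H \<Longrightarrow> wclco \<tau> S \<subseteq> H"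
proof -
  let ?F = "{C. S \<subseteq> C \<and> convex_fun C \<and> closedin (wstar \<tau>) C}"
  have dF: "dual \<tau> \<in> ?F" using S convex_fun_dual closedin_topspace[of "wstar \<tau>"] by (simp add: wstar_top)
  show "wclco \<tau> S \<subseteq> dual \<tau>" unfolding wclco_def using dF by blast
  show "S \<subseteq> wclco \<tau> S" unfolding wclco_def by blast
  show "closedin (wstar \<tau>) (wclco \<tau> S)" unfolding wclco_def
    by (rule closedin_Inter) (use dF in auto)
  show "convex_fun (wclco \<tau> S)" unfolding wclco_def convex_fun_def by blast
  show "\<And>H. S \<subseteq> H \<Longrightarrow> convex_fun H \<Longrightarrow> closedin (wstar \<tau>) H \<Longrightarrow> wclco \<tau> S \<subseteq> H"
    unfolding wclco_def by blast
qed

lemma halfspace_closed: "closedin (wstar \<tau>) {\<phi> \<in> dual \<tau>. \<phi> v \<le> B}"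
proof -
  have "closedin PT {\<phi> \<in> topspace PT. \<phi> v \<in> {..B}}"
    by (rule closedin_continuous_map_preimage[OF PT_proj]) simp
  moreover have "{\<phi> \<in> topspace PT. \<phi> v \<in> {..B}} = {\<phi>::'a \<Rightarrow> real. \<phi> v \<le> B}" by auto
  ultimately have "closedin PT {\<phi>::'a \<Rightarrow> real. \<phi> v \<le> B}" by simp
  moreover have "{\<phi> \<in> dual \<tau>. \<phi> v \<le> B} = {\<phi>. \<phi> v \<le> B} \<inter> dual \<tau>" by auto
  ultimately show ?thesis unfolding wstar_def closedin_subtopology by blast
qed

lemma convex_fun_halfspace: "convex_fun {\<phi> \<in> dual \<tau>. \<phi> v \<le> B}"
  unfolding convex_fun_def
proof (intro ballI allI impI)
  fix \<phi> \<psi> :: "'a \<Rightarrow> real" and u :: real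
  assume a: "\<phi> \<in> {\<phi> \<in> dual \<tau>. \<phi> v \<le> B}" "\<psi> \<in> {\<phi> \<in> dual \<tau>. \<phi> v \<le> B}" "0 \<le> u \<and> u \<le> 1"
  have "u * \<phi> v + (1 - u) * \<psi> v \<le> u * B + (1 - u) * B"
    using a by (intro add_mono mult_left_mono) auto
  thus "(\<lambda>y. u * \<phi> y + (1 - u) * \<psi> y) \<in> {\<phi> \<in> dual \<tau>. \<phi> v \<le> B}"
    using dual_comb[of \<phi> \<tau> \<psi> u "1-u"] a by (simp add: algebra_simps)
qed

lemma bound_aux:
  assumes \<phi>: "\<phi> \<in> eps_subdiff \<tau> \<epsilon> (\<lambda>z. ereal c * G z) x" and c: "0 < c" "c \<le> 1"
    and Gv: "G v \<le> ereal P0" "G v \<noteq> -\<infinity>" and m: "ereal m \<le> ereal c * G x"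
  shows "\<phi> (v - x) \<le> max 0 P0 - m + \<epsilon>"
proof -
  have fin: "ereal c * G x \<notin> {-\<infinity>, \<infinity>}" and ineq: "ereal c * G v \<ge> ereal c * G x + ereal (\<phi> (v - x)) - ereal \<epsilon>"
    using \<phi> unfolding eps_subdiff_def by (auto split: if_splits)
  obtain gq where gq: "G x = ereal gq" using fin c by (cases "G x") auto
  obtain q where q: "G v = ereal q" using Gv by (cases "G v") auto
  have "c * gq + \<phi> (v - x) - \<epsilon> \<le> c * q" using ineq gq q by simp
  moreover have "m \<le> c * gq" using m gq by simp
  moreover have "q \<le> P0" using Gv q by simp
  moreover have "c * q \<le> max 0 P0"
  proof (cases "q \<ge> 0")
    case True
    have "c * q \<le> 1 * q" using c True by (intro mult_right_mono) auto
    thus ?thesis using \<open>q \<le> P0\<close> by simp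
  next
    case False
    hence "c * q < 0" using c by (simp add: mult_pos_neg)
    thus ?thesis by simp
  qed
  ultimately show ?thesis by simp
qed

lemma sh_dom:
  fixes F :: "'b \<Rightarrow> 'a::real_vector \<Rightarrow> ereal"
  assumes sh: "SH TT T F" and T: "T \<noteq> {}" and G: "\<And>t. t \<in> T \<Longrightarrow> F t \<in> Gamma0 \<tau>"
    and fx: "(SUP t\<in>T. F t x) = ereal fx"
    and ex: "\<forall>t\<in>T. \<exists>s>0. F t (x + s *\<^sub>R u) < \<infinity>"
  shows "\<exists>s>0. (SUP t\<in>T. F t (x + s *\<^sub>R u)) < \<infinity>"
proof -
  have top: "topspace TT = T" and cpt: "compact_space TT"
    and op: "\<forall>z. \<forall>c::real. openin TT {t \<in> T. F t z < ereal c}" using sh unfolding SH_def by auto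
  obtain st where st: "\<forall>t\<in>T. st t > 0 \<and> F t (x + st t *\<^sub>R u) < \<infinity>"
    using bchoice[OF ex] by blast
  define ct where "ct t = real_of_ereal (F t (x + st t *\<^sub>R u)) + 1" for t
  define Ot where "Ot t = {t' \<in> T. F t' (x + st t *\<^sub>R u) < ereal (ct t)}" for t
  have Oto: "openin TT (Ot t)" for t unfolding Ot_def using op by blast
  have tOt: "t \<in> Ot t" if "t \<in> T" for t
  proof -
    have "F t (x + st t *\<^sub>R u) \<noteq> -\<infinity>" using G[OF that] unfolding Gamma0_def by blast
    moreover have "F t (x + st t *\<^sub>R u) < \<infinity>" using st that by blast
    ultimately have "F t (x + st t *\<^sub>R u) < ereal (ct t)" unfolding ct_def
      by (cases "F t (x + st t *\<^sub>R u)") auto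
    thus ?thesis unfolding Ot_def using that by blast
  qed
  have "compactin TT T" using cpt top unfolding compact_space_def by simp
  moreover have "T \<subseteq> \<Union>(Ot ` T)" using tOt by blast
  ultimately obtain \<F> where \<F>: "finite \<F>" "\<F> \<subseteq> Ot ` T" "T \<subseteq> \<Union>\<F>"
    unfolding compactin_def using Oto by (metis (no_types, lifting) imageE)
  obtain T0 where T0: "T0 \<subseteq> T" "finite T0" "\<F> = Ot ` T0" using finite_subset_image[OF \<F>(1,2)] by blast
  have T0ne: "T0 \<noteq> {}" using T0 \<F>(3) T by auto
  define s where "s = Min (st ` T0)"
  define Cb where "Cb = Max (ct ` T0)"
  define Mb where "Mb = max Cb fx"
  have spos: "s > 0" unfolding s_def using T0 T0ne st by (subst Min_gr_iff) auto
  have bound: "F t' (x + s *\<^sub>R u) \<le> ereal Mb" if t': "t' \<in> T" for t'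
  proof -
    have "t' \<in> \<Union>\<F>" using \<F>(3) t' by blast
    then obtain ti where ti: "ti \<in> T0" "t' \<in> Ot ti" unfolding T0(3) by blast
    have tiT: "ti \<in> T" using ti T0 by blast
    have sti: "st ti > 0" using st tiT by blast
    have sle: "s \<le> st ti" unfolding s_def using T0 ti by (intro Min_le) auto
    have cle: "ct ti \<le> Cb" unfolding Cb_def using T0 ti by (intro Max_ge) auto
    define l where "l = s / st ti"
    have l: "0 \<le> l" "l \<le> 1" unfolding l_def using spos sti sle by auto
    have pt: "x + s *\<^sub>R u = l *\<^sub>R (x + st ti *\<^sub>R u) + (1 - l) *\<^sub>R x"
    proof -
      have "l * st ti = s" unfolding l_def using sti by simp
      hence "l *\<^sub>R (x + st ti *\<^sub>R u) + (1 - l) *\<^sub>R x = x + (l * st ti) *\<^sub>R u"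
        by (simp add: algebra_simps)
      thus ?thesis using \<open>l * st ti = s\<close> by simp
    qed
    have cvx: "\<forall>x y. \<forall>u::real. 0 \<le> u \<and> u \<le> 1 \<longrightarrow>
          F t' (u *\<^sub>R x + (1 - u) *\<^sub>R y) \<le> ereal u * F t' x + ereal (1 - u) * F t' y"
      using G[OF t'] unfolding Gamma0_def by blast
    have "F t' (x + s *\<^sub>R u) \<le> ereal l * F t' (x + st ti *\<^sub>R u) + ereal (1 - l) * F t' x"
      unfolding pt using cvx l by blast
    also have "\<dots> \<le> ereal l * ereal Cb + ereal (1 - l) * ereal fx"
    proof (intro add_mono ereal_mult_left_mono)
      have "F t' (x + st ti *\<^sub>R u) < ereal (ct ti)" using ti(2) unfolding Ot_def by blast
      thus "F t' (x + st ti *\<^sub>R u) \<le> ereal Cb" using cle by (meson ereal_less_eq(3) less_imp_le order_trans)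
      have "F t' x \<le> (SUP t\<in>T. F t x)" using t' by (rule SUP_upper)
      thus "F t' x \<le> ereal fx" using fx by simp
    qed (use l in auto)
    also have "\<dots> = ereal (l * Cb + (1 - l) * fx)" by simp
    also have "\<dots> \<le> ereal Mb"
    proof -
      have "l * Cb + (1 - l) * fx \<le> l * Mb + (1 - l) * Mb" unfolding Mb_def using l
        by (intro add_mono mult_left_mono) auto
      thus ?thesis by (simp add: algebra_simps)
    qed
    finally show ?thesis .
  qed
  have "(SUP t\<in>T. F t (x + s *\<^sub>R u)) \<le> ereal Mb" using bound by (rule SUP_least)
  hence "(SUP t\<in>T. F t (x + s *\<^sub>R u)) < \<infinity>" by (rule le_less_trans) simp
  thus ?thesis using spos by (intro exI[of _ s] conjI)
qed


lemma eps_subdiff_dual: "eps_subdiff \<tau> \<epsilon> g x \<subseteq> dual \<tau>"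
proof (cases "g x \<in> {-\<infinity>, \<infinity>}")
  case True thus ?thesis unfolding eps_subdiff_def if_P[OF True] by blast
next
  case False thus ?thesis unfolding eps_subdiff_def if_not_P[OF False] by blast
qed

lemma part1:
  fixes \<tau> :: "'a::real_vector topology" and T :: "'b set"
    and F :: "'b \<Rightarrow> 'a \<Rightarrow> ereal" and e :: "'b \<Rightarrow> real" and x :: 'a
  assumes T: "T \<noteq> {}"
    and G: "\<And>t. t \<in> T \<Longrightarrow> F t \<in> Gamma0 \<tau>"
    and xd: "x \<in> edom (\<lambda>z. SUP t\<in>T. F t z)"
    and e: "\<And>t. t \<in> T \<Longrightarrow> 0 < e t \<and> e t \<le> 1"
    and inf: "(INF t\<in>T. ereal (e t) * F t x) > -\<infinity>"
    and y: "y \<in> rec_cone (wclco \<tau> (\<Union>t\<in>T. eps_subdiff \<tau> \<epsilon> (\<lambda>z. ereal (e t) * F t z) x))"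
  shows "y \<in> normal_cone \<tau> (edom (\<lambda>z. SUP t\<in>T. F t z)) x"
proof -
  define S where "S = (\<Union>t\<in>T. eps_subdiff \<tau> \<epsilon> (\<lambda>z. ereal (e t) * F t z) x)"
  have Sd: "S \<subseteq> dual \<tau>" unfolding S_def using eps_subdiff_dual by blast
  note W = wclco_props[OF Sd]
  obtain z where z: "z \<in> wclco \<tau> S" "\<forall>r::real. r \<ge> 0 \<longrightarrow> (\<lambda>v. z v + r * y v) \<in> wclco \<tau> S"
  proof -
    have "y \<in> rec_cone (wclco \<tau> S)" using y unfolding S_def .
    hence "\<exists>z\<in>wclco \<tau> S. \<forall>r::real. r \<ge> 0 \<longrightarrow> (\<lambda>v. z v + r * y v) \<in> wclco \<tau> S"
      unfolding rec_cone_def by (rule CollectD)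
    thus ?thesis by (elim bexE) (rule that; assumption)
  qed
  have zd: "z \<in> dual \<tau>" using z(1) W(1) by (rule subsetD[rotated])
  have z1: "(\<lambda>v. z v + 1 * y v) \<in> dual \<tau>" using z(2)[rule_format, of 1] W(1) by (intro subsetD[OF W(1)]) simp
  have ey: "(\<lambda>v. 1 * (z v + 1 * y v) + (-1) * z v) = y" by (simp add: fun_eq_iff)
  have "(\<lambda>v. 1 * (z v + 1 * y v) + (-1) * z v) \<in> dual \<tau>" by (rule dual_comb[OF z1 zd])
  hence yd: "y \<in> dual \<tau>" unfolding ey .
  obtain t0 where t0: "t0 \<in> T" using T by blast
  have nm: "\<And>t v. t \<in> T \<Longrightarrow> F t v \<noteq> -\<infinity>" using G unfolding Gamma0_def by blast
  have Fle: "\<And>t v. t \<in> T \<Longrightarrow> F t v \<le> (SUP t\<in>T. F t v)" by (rule SUP_upper)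
  obtain m where m: "(INF t\<in>T. ereal (e t) * F t x) = ereal m"
  proof -
    have "(INF t\<in>T. ereal (e t) * F t x) \<le> ereal (e t0) * F t0 x" using t0 by (rule INF_lower)
    moreover have "F t0 x < \<infinity>" using Fle[OF t0, of x] xd unfolding edom_def by auto
    ultimately have "(INF t\<in>T. ereal (e t) * F t x) < \<infinity>"
      using e[OF t0] nm[OF t0, of x] by (cases "F t0 x") auto
    thus ?thesis using inf that by (cases "(INF t\<in>T. ereal (e t) * F t x)") auto
  qed
  have "\<forall>v \<in> edom (\<lambda>z. SUP t\<in>T. F t z). y (v - x) \<le> 0"
  proof
    fix v assume v: "v \<in> edom (\<lambda>z. SUP t\<in>T. F t z)"
    obtain P0 where P0: "(SUP t\<in>T. F t v) = ereal P0"
    proof -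
      have "(SUP t\<in>T. F t v) < \<infinity>" using v unfolding edom_def by simp
      moreover have "(SUP t\<in>T. F t v) \<noteq> -\<infinity>" using Fle[OF t0, of v] nm[OF t0, of v] by auto
      ultimately show ?thesis using that by (cases "(SUP t\<in>T. F t v)") auto
    qed
    define B where "B = max 0 P0 - m + \<epsilon>"
    define H where "H = {\<phi> \<in> dual \<tau>. \<phi> (v - x) \<le> B}"
    have SH: "S \<subseteq> H"
    proof
      fix \<phi> assume "\<phi> \<in> S"
      then obtain t where t: "t \<in> T" "\<phi> \<in> eps_subdiff \<tau> \<epsilon> (\<lambda>z. ereal (e t) * F t z) x" unfolding S_def by blast
      have "ereal m \<le> ereal (e t) * F t x" using INF_lower[OF t(1), of "\<lambda>t. ereal (e t) * F t x"] m by simp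
      moreover have "F t v \<le> ereal P0" using Fle[OF t(1), of v] P0 by simp
      ultimately have "\<phi> (v - x) \<le> max 0 P0 - m + \<epsilon>"
        using bound_aux[OF t(2)] e[OF t(1)] nm[OF t(1)] by blast
      thus "\<phi> \<in> H" unfolding H_def B_def using t(2) unfolding eps_subdiff_def by (auto split: if_splits)
    qed
    have CH: "wclco \<tau> S \<subseteq> H" unfolding H_def
      by (rule W(5)) (use SH halfspace_closed convex_fun_halfspace in \<open>auto simp: H_def\<close>)
    show "y (v - x) \<le> 0"
    proof (rule ccontr)
      assume pos: "\<not> y (v - x) \<le> 0"
      define r where "r = (B - z (v - x) + 1) / y (v - x)"
      have r0: "r \<ge> 0 \<or> r < 0" by auto
      define r' where "r' = max 0 r"
      have "(\<lambda>w. z w + r' * y w) \<in> H" using z(2) CH unfolding r'_def by auto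
      hence "z (v - x) + r' * y (v - x) \<le> B" unfolding H_def by simp
      moreover have "r' * y (v - x) \<ge> B - z (v - x) + 1"
      proof -
        have "r * y (v - x) = B - z (v - x) + 1" unfolding r_def using pos by simp
        moreover have "r' * y (v - x) \<ge> r * y (v - x)" unfolding r'_def using pos
          by (intro mult_right_mono) auto
        ultimately show ?thesis by simp
      qed
      ultimately show False by simp
    qed
  qed
  thus ?thesis unfolding normal_cone_def using yd by blast
qed

theorem theorem1:
  fixes \<tau> :: "'a::real_vector topology" and T :: "'b set"
    and F :: "'b \<Rightarrow> 'a \<Rightarrow> ereal" and e :: "'b \<Rightarrow> real" and x :: 'a
  assumes "lcs \<tau>"
    and "T \<noteq> {}"
    and "\<And>t. t \<in> T \<Longrightarrow> F t \<in> Gamma0 \<tau>"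
    and "x \<in> edom (\<lambda>z. SUP t\<in>T. F t z)"
    and "\<And>t. t \<in> T \<Longrightarrow> 0 < e t \<and> e t \<le> 1"
    and "(INF t\<in>T. ereal (e t) * F t x) > -\<infinity>"
  shows "(\<forall>\<epsilon>>0. rec_cone (wclco \<tau> (\<Union>t\<in>T. eps_subdiff \<tau> \<epsilon> (\<lambda>z. ereal (e t) * F t z) x))
            \<subseteq> normal_cone \<tau> (edom (\<lambda>z. SUP t\<in>T. F t z)) x)
       \<and> (\<forall>TT. SH TT T F \<longrightarrow>
            (\<forall>\<epsilon>>0. normal_cone \<tau> (edom (\<lambda>z. SUP t\<in>T. F t z)) x
               = rec_cone (wclco \<tau> (\<Union>t\<in>T. eps_subdiff \<tau> \<epsilon> (\<lambda>z. ereal (e t) * F t z) x))))"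
proof -
  note lcs = assms(1) and T = assms(2) and G = assms(3) and xd = assms(4) and e = assms(5) and inf = assms(6)
  have P1: "rec_cone (wclco \<tau> (\<Union>t\<in>T. eps_subdiff \<tau> \<epsilon> (\<lambda>z. ereal (e t) * F t z) x))
            \<subseteq> normal_cone \<tau> (edom (\<lambda>z. SUP t\<in>T. F t z)) x" for \<epsilon>
    using part1[OF T G xd e inf] by blast
  have P2: "normal_cone \<tau> (edom (\<lambda>z. SUP t\<in>T. F t z)) x
      \<subseteq> rec_cone (wclco \<tau> (\<Union>t\<in>T. eps_subdiff \<tau> \<epsilon> (\<lambda>z. ereal (e t) * F t z) x))"
    if sh: "SH TT T F" and \<epsilon>: "\<epsilon> > 0" for TT \<epsilon>
  proof
    fix y assume y: "y \<in> normal_cone \<tau> (edom (\<lambda>z. SUP t\<in>T. F t z)) x"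
    have yd: "y \<in> dual \<tau>" and yN: "\<forall>v\<in>edom (\<lambda>z. SUP t\<in>T. F t z). y (v - x) \<le> 0"
      using y unfolding normal_cone_def by auto
    define g where "g t = (\<lambda>z. ereal (e t) * F t z)" for t
    define S where "S = (\<Union>t\<in>T. eps_subdiff \<tau> \<epsilon> (g t) x)"
    have Sd: "S \<subseteq> dual \<tau>" unfolding S_def using eps_subdiff_dual by blast
    note W = wclco_props[OF Sd]
    define C where "C = wclco \<tau> S"
    have nm: "\<And>t v. t \<in> T \<Longrightarrow> F t v \<noteq> -\<infinity>" using G unfolding Gamma0_def by blast
    have Fle: "\<And>t v. t \<in> T \<Longrightarrow> F t v \<le> (SUP t\<in>T. F t v)" by (rule SUP_upper)
    obtain t0 where t0: "t0 \<in> T" using T by blast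
    obtain fx where fx: "(SUP t\<in>T. F t x) = ereal fx"
    proof -
      have "(SUP t\<in>T. F t x) < \<infinity>" using xd unfolding edom_def by simp
      moreover have "(SUP t\<in>T. F t x) \<noteq> -\<infinity>" using Fle[OF t0, of x] nm[OF t0, of x] by auto
      ultimately show ?thesis using that by (cases "(SUP t\<in>T. F t x)") auto
    qed
    have gG: "g t \<in> Gamma0 \<tau>" if "t \<in> T" for t unfolding g_def using Gamma0_scale[OF G[OF that]] e[OF that] by blast
    have gfin: "g t x = ereal (e t * real_of_ereal (F t x))" if t: "t \<in> T" for t
    proof -
      have "F t x \<le> ereal fx" using Fle[OF t, of x] fx by simp
      thus ?thesis unfolding g_def using nm[OF t, of x] by (cases "F t x") auto
    qed
    obtain \<phi>0 where \<phi>0: "\<phi>0 \<in> eps_subdiff \<tau> \<epsilon> (g t0) x"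
    proof -
      have "\<forall>s. 0 < s \<and> s \<le> 1 \<longrightarrow> ereal (e t0 * real_of_ereal (F t0 x) - \<epsilon>/2 + s * 0) < g t0 (x + s *\<^sub>R 0)"
        using gfin[OF t0] \<epsilon> by simp
      from eps_sub_exists[OF lcs gG[OF t0] gfin[OF t0] \<epsilon> this] show ?thesis using that by blast
    qed
    have \<phi>0S: "\<phi>0 \<in> S" unfolding S_def using \<phi>0 t0 by blast
    define sig where "sig u = (SUP \<phi>\<in>S. ereal (\<phi> u))" for u
    have sigge: "ereal (\<phi> u) \<le> sig u" if "\<phi> \<in> S" for \<phi> u unfolding sig_def using that by (rule SUP_upper)
    have key: "y u \<le> 0" if fin: "sig u \<noteq> \<infinity>" for u
    proof -
      obtain M where M: "sig u = ereal M"
      proof -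
        have "sig u \<noteq> -\<infinity>" using sigge[OF \<phi>0S, of u] by auto
        thus ?thesis using fin that by (cases "sig u") auto
      qed
      have ex: "\<forall>t\<in>T. \<exists>s>0. F t (x + s *\<^sub>R u) < \<infinity>"
      proof (rule ccontr)
        assume "\<not> (\<forall>t\<in>T. \<exists>s>0. F t (x + s *\<^sub>R u) < \<infinity>)"
        then obtain t where t: "t \<in> T" "\<forall>s>0. \<not> F t (x + s *\<^sub>R u) < \<infinity>" by blast
        have inf': "g t (x + s *\<^sub>R u) = \<infinity>" if "s > 0" for s
          using t(2) that e[OF t(1)] unfolding g_def by (auto simp: top.not_eq_extremum ereal_mult_infty)
        have "\<forall>s. 0 < s \<and> s \<le> 1 \<longrightarrow> ereal (e t * real_of_ereal (F t x) - \<epsilon>/2 + s * (M + \<epsilon>)) < g t (x + s *\<^sub>R u)"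
          using inf' by simp
        from eps_sub_exists[OF lcs gG[OF t(1)] gfin[OF t(1)] \<epsilon> this]
        obtain \<phi> where \<phi>: "\<phi> \<in> eps_subdiff \<tau> \<epsilon> (g t) x" "M + \<epsilon> - \<epsilon>/2 < \<phi> u" by blast
        have "\<phi> \<in> S" unfolding S_def using \<phi>(1) t(1) by blast
        hence "\<phi> u \<le> M" using sigge[of \<phi> u] M by simp
        thus False using \<phi>(2) \<epsilon> by simp
      qed
      obtain s where s: "s > 0" "(SUP t\<in>T. F t (x + s *\<^sub>R u)) < \<infinity>"
        using sh_dom[OF sh T G fx ex] by blast
      have "x + s *\<^sub>R u \<in> edom (\<lambda>z. SUP t\<in>T. F t z)" unfolding edom_def using s(2) by simp
      hence "y ((x + s *\<^sub>R u) - x) \<le> 0" using yN by blast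
      hence "s * y u \<le> 0" using yd unfolding dual_def by (simp add: linear_scale)
      thus ?thesis using s(1) by (simp add: mult_le_0_iff)
    qed
    have DC: "\<psi> \<in> C" if \<psi>: "\<psi> \<in> dual \<tau>" "\<forall>u. ereal (\<psi> u) \<le> sig u" for \<psi>
    proof (rule ccontr)
      assume "\<psi> \<notin> C"
      then obtain u c where uc: "\<forall>kap\<in>C. kap u < c" "c < \<psi> u"
        using wstar_sep[OF W(3) W(4) \<psi>(1)] unfolding C_def by blast
      have "sig u \<le> ereal c" unfolding sig_def
      proof (rule SUP_least)
        fix kap assume "kap \<in> S"
        hence "kap \<in> C" using W(2) unfolding C_def by blast
        thus "ereal (kap u) \<le> ereal c" using uc(1) by (simp add: less_imp_le)
      qed
      hence "ereal (\<psi> u) \<le> ereal c" using \<psi>(2) by (meson order_trans)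
      thus False using uc(2) by simp
    qed
    have "y \<in> rec_cone C" unfolding rec_cone_def
    proof (intro CollectI bexI[of _ \<phi>0] allI impI)
      show "\<phi>0 \<in> C" using \<phi>0S W(2) unfolding C_def by blast
      fix r :: real assume r: "r \<ge> 0"
      have \<phi>0d: "\<phi>0 \<in> dual \<tau>" using \<phi>0S Sd by blast
      have "(\<lambda>v. 1 * \<phi>0 v + r * y v) \<in> dual \<tau>" using dual_comb[OF \<phi>0d yd] .
      hence d: "(\<lambda>v. \<phi>0 v + r * y v) \<in> dual \<tau>" by simp
      have "\<forall>u. ereal (\<phi>0 u + r * y u) \<le> sig u"
      proof
        fix u show "ereal (\<phi>0 u + r * y u) \<le> sig u"
        proof (cases "sig u = \<infinity>")
          case True thus ?thesis by simp
        next
          case False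
          hence "y u \<le> 0" by (rule key)
          hence "\<phi>0 u + r * y u \<le> \<phi>0 u" using r by (simp add: mult_nonneg_nonpos)
          hence "ereal (\<phi>0 u + r * y u) \<le> ereal (\<phi>0 u)" by simp
          thus ?thesis using sigge[OF \<phi>0S, of u] by (meson order_trans)
        qed
      qed
      thus "(\<lambda>v. \<phi>0 v + r * y v) \<in> C" using DC[OF d] by simp
    qed
    thus "y \<in> rec_cone (wclco \<tau> (\<Union>t\<in>T. eps_subdiff \<tau> \<epsilon> (\<lambda>z. ereal (e t) * F t z) x))"
      unfolding C_def S_def g_def .
  qed
  show ?thesis using P1 P2 by blast
qed


end
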